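(* There is a constant $C_3>0$ depending only on $n$ such that the following holds. Let $0<\tilde\epsilon<\tfrac12$ and let $h\in C^{2,1}(\mathbb{R}^n\times[0,\infty))$ be a solution of the Ricci DeTurck equation with $\|h\|_{L^\infty(\mathbb{R}^n\times[0,\infty))}<\tilde\epsilon$. Then for every $R>0$ $$\frac12\partial_t\int_{\mathbb{R}^n}\eta_R|h|^2\,dx\leq\Big(-\frac12+C_3\tilde\epsilon\Big)\int_{\mathbb{R}^n}\eta_R|\nabla h|^2\,dx+\frac{C_3}{R^2}\int_{B_{2R}\setminus B_R}|h|^2\,dx.$$
   Context: Let $\delta=g_{eucl}$ be the Euclidean metric on $\mathbb{R}^n$; norms, $\nabla$ and $\Delta$ are Euclidean, and $(\delta+h)^{ab}$ is the inverse matrix of $\delta_{ab}+h_{ab}$. The Ricci DeTurck equation for a time-dependent symmetric 2-tensor $h$ is $(\partial_t-\Delta)h_{ij}=Q_0[h]_{ij}+\nabla_a(Q_1[h]^a_{ij})$, with $Q_0[h]_{ij}=\tfrac12(\delta+h)^{ab}(\delta+h)^{pq}(\nabla_i h_{pa}\nabla_j h_{qb}+2\nabla_a h_{jp}\nabla_q h_{ib}-2\nabla_a h_{jp}\nabla_b h_{iq}-2\nabla_j h_{pa}\nabla_b h_{iq}-2\nabla_i h_{pa}\nabla_b h_{jq})-\nabla_a(\delta+h)^{ab}\nabla_b h_{ij}$ and $Q_1[h]^a_{ij}=((\delta+h)^{ab}-\delta^{ab})\nabla_b h_{ij}$. $\eta$ is a fixed cut-off function on $\mathbb{R}^n$ with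 $\eta,\nabla\sqrt\eta\in C^\infty_c(B_2(0))$, $0\leq\eta\leq1$, $\eta\equiv1$ on $B_1(0)$, $|\nabla\eta|\leq c$ for a universal $c$; $\eta_R(y)=\eta(y/R)$. Balls $B_R$ are centered at $0$. *)

theory Defs
  imports "HOL-Analysis.Analysis"
begin

definition pd :: "'n::finite \<Rightarrow> (real^'n \<Rightarrow> real) \<Rightarrow> real^'n \<Rightarrow> real" where
  "pd a f x = deriv (\<lambda>s. f (x + s *\<^sub>R axis a 1)) 0"

definition has_pd :: "'n::finite \<Rightarrow> (real^'n \<Rightarrow> real) \<Rightarrow> real^'n \<Rightarrow> bool" where
  "has_pd a f x \<longleftrightarrow> (\<lambda>s. f (x + s *\<^sub>R axis a 1)) differentiable (at 0)"

fun iter_pd :: "'n::finite list \<Rightarrow> (real^'n \<Rightarrow> real) \<Rightarrow> real^'n \<Rightarrow> real" where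
  "iter_pd [] f = f"
| "iter_pd (a # as) f = pd a (iter_pd as f)"

definition smooth :: "(real^'n::finite \<Rightarrow> real) \<Rightarrow> bool" where
  "smooth f \<longleftrightarrow> (\<forall>as x. iter_pd as f differentiable (at x))"

definition csupp :: "(real^'n::finite \<Rightarrow> real) \<Rightarrow> (real^'n) set" where
  "csupp f = closure {x. f x \<noteq> 0}"

definition cutoff :: "real \<Rightarrow> (real^'n::finite \<Rightarrow> real) \<Rightarrow> bool" where
  "cutoff c \<eta> \<longleftrightarrow>
     smooth \<eta> \<and> csupp \<eta> \<subseteq> ball 0 2 \<and>
     (\<forall>x. (\<lambda>y. sqrt (\<eta> y)) differentiable (at x)) \<and>
     (\<forall>a. smooth (pd a (\<lambda>y. sqrt (\<eta> y))) \<and> csupp (pd a (\<lambda>y. sqrt (\<eta> y))) \<subseteq> ball 0 2) \<and>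
     (\<forall>x. 0 \<le> \<eta> x \<and> \<eta> x \<le> 1) \<and>
     (\<forall>x\<in>ball 0 1. \<eta> x = 1) \<and>
     (\<forall>x. sqrt (\<Sum>a\<in>UNIV. (pd a \<eta> x)\<^sup>2) \<le> c)"

definition etaR :: "(real^'n::finite \<Rightarrow> real) \<Rightarrow> real \<Rightarrow> real^'n \<Rightarrow> real" where
  "etaR \<eta> R y = \<eta> ((1 / R) *\<^sub>R y)"

text \<open>Operators acting on a spatial slice H of the tensor field (H y $ i $ j = h_ij(y)).\<close>
definition Dh :: "(real^'n \<Rightarrow> real^'n^'n) \<Rightarrow> 'n::finite \<Rightarrow> 'n \<Rightarrow> 'n \<Rightarrow> real^'n \<Rightarrow> real" where
  "Dh H a i j y = pd a (\<lambda>z. H z $ i $ j) y"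

definition ginv :: "(real^'n \<Rightarrow> real^'n^'n) \<Rightarrow> real^'n \<Rightarrow> real^'n^'n::finite" where
  "ginv H y = matrix_inv (mat 1 + H y)"

definition kd :: "'n \<Rightarrow> 'n \<Rightarrow> real" where
  "kd a b = (if a = b then 1 else 0)"

definition Q0 :: "(real^'n \<Rightarrow> real^'n^'n) \<Rightarrow> 'n::finite \<Rightarrow> 'n \<Rightarrow> real^'n \<Rightarrow> real" where
  "Q0 H i j y =
     (1/2) * (\<Sum>a\<in>UNIV. \<Sum>b\<in>UNIV. \<Sum>p\<in>UNIV. \<Sum>q\<in>UNIV.
        ginv H y $ a $ b * ginv H y $ p $ q *
        ( Dh H i p a y * Dh H j q b y
        + 2 * Dh H a j p y * Dh H q i b y
        - 2 * Dh H a j p y * Dh H b i q y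
        - 2 * Dh H j p a y * Dh H b i q y
        - 2 * Dh H i p a y * Dh H b j q y))
     - (\<Sum>a\<in>UNIV. \<Sum>b\<in>UNIV. pd a (\<lambda>z. ginv H z $ a $ b) y * Dh H b i j y)"

definition divQ1 :: "(real^'n \<Rightarrow> real^'n^'n) \<Rightarrow> 'n::finite \<Rightarrow> 'n \<Rightarrow> real^'n \<Rightarrow> real" where
  "divQ1 H i j y =
     (\<Sum>a\<in>UNIV. pd a (\<lambda>z. \<Sum>b\<in>UNIV. (ginv H z $ a $ b - kd a b) * Dh H b i j z) y)"

definition lap :: "(real^'n \<Rightarrow> real^'n^'n) \<Rightarrow> 'n::finite \<Rightarrow> 'n \<Rightarrow> real^'n \<Rightarrow> real" where
  "lap H i j y = (\<Sum>a\<in>UNIV. pd a (\<lambda>z. Dh H a i j z) y)"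

definition C21 :: "(real^'n::finite \<Rightarrow> real \<Rightarrow> real^'n^'n) \<Rightarrow> bool" where
  "C21 h \<longleftrightarrow> (\<forall>i j.
     continuous_on (UNIV \<times> {0..}) (\<lambda>(x,t). h x t $ i $ j) \<and>
     (\<forall>t\<ge>0. \<forall>x a. has_pd a (\<lambda>y. h y t $ i $ j) x) \<and>
     (\<forall>t\<ge>0. \<forall>x a b. has_pd b (\<lambda>y. pd a (\<lambda>z. h z t $ i $ j) y) x) \<and>
     (\<forall>a. continuous_on (UNIV \<times> {0..}) (\<lambda>(x,t). pd a (\<lambda>z. h z t $ i $ j) x)) \<and>
     (\<forall>a b. continuous_on (UNIV \<times> {0..})
        (\<lambda>(x,t). pd b (\<lambda>y. pd a (\<lambda>z. h z t $ i $ j) y) x)) \<and>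
     (\<exists>ht. continuous_on (UNIV \<times> {0..}) (\<lambda>(x,t). ht x t) \<and>
        (\<forall>x. \<forall>t\<ge>0. ((\<lambda>s. h x s $ i $ j) has_real_derivative ht x t) (at t within {0..}))))"

definition symmetric_field :: "(real^'n::finite \<Rightarrow> real \<Rightarrow> real^'n^'n) \<Rightarrow> bool" where
  "symmetric_field h \<longleftrightarrow> (\<forall>x t i j. h x t $ i $ j = h x t $ j $ i)"

definition ricci_deturck :: "(real^'n::finite \<Rightarrow> real \<Rightarrow> real^'n^'n) \<Rightarrow> bool" where
  "ricci_deturck h \<longleftrightarrow> (\<forall>x. \<forall>t>0. \<forall>i j.
     deriv (\<lambda>s. h x s $ i $ j) t - lap (\<lambda>y. h y t) i j x
       = Q0 (\<lambda>y. h y t) i j x + divQ1 (\<lambda>y. h y t) i j x)"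

text \<open>|grad h|^2 = sum over a,i,j of (d_a h_ij)^2; |h|^2 is the Frobenius norm (= norm on real^'n^'n).\<close>
definition grad_sq :: "(real^'n::finite \<Rightarrow> real \<Rightarrow> real^'n^'n) \<Rightarrow> real \<Rightarrow> real^'n \<Rightarrow> real" where
  "grad_sq h t x = (\<Sum>a\<in>UNIV. \<Sum>i\<in>UNIV. \<Sum>j\<in>UNIV. (Dh (\<lambda>y. h y t) a i j x)\<^sup>2)"

end

theory Submission
  imports Defs
begin

definition ld :: "'n::finite \<Rightarrow> (real^'n \<Rightarrow> real) \<Rightarrow> (real^'n \<Rightarrow> real) \<Rightarrow> bool" where
  "ld a f f' \<longleftrightarrow> (\<forall>y. ((\<lambda>s. f (y + s *\<^sub>R axis a 1)) has_real_derivative f' y) (at 0))"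

lemma ld_pd: "ld a f f' \<Longrightarrow> pd a f y = f' y"
  unfolding ld_def pd_def by (simp add: DERIV_imp_deriv)

lemma ld_pd_fun: "ld a f f' \<Longrightarrow> pd a f = f'"
  using ld_pd by blast

lemma ld_at:
  assumes "ld a f f'"
  shows "((\<lambda>s. f (y + s *\<^sub>R axis a 1)) has_real_derivative f' (y + s0 *\<^sub>R axis a 1)) (at s0)"
proof -
  have "((\<lambda>u. f ((y + s0 *\<^sub>R axis a 1) + u *\<^sub>R axis a 1)) has_real_derivative f' (y + s0 *\<^sub>R axis a 1)) (at 0)"
    using assms unfolding ld_def by blast
  then have "((\<lambda>u. (\<lambda>s. f (y + s *\<^sub>R axis a 1)) (u + s0)) has_real_derivative f' (y + s0 *\<^sub>R axis a 1)) (at 0)"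
    by (simp add: algebra_simps scaleR_add_left)
  then show ?thesis using DERIV_shift[of "\<lambda>s. f (y + s *\<^sub>R axis a 1)" _ 0 s0] by simp
qed

lemma ld_const: "ld a (\<lambda>y. c) (\<lambda>y. 0)"
  unfolding ld_def by simp

lemma ld_add: "ld a f f' \<Longrightarrow> ld a g g' \<Longrightarrow> ld a (\<lambda>y. f y + g y) (\<lambda>y. f' y + g' y)"
  unfolding ld_def by (auto intro!: derivative_eq_intros)

lemma ld_diff: "ld a f f' \<Longrightarrow> ld a g g' \<Longrightarrow> ld a (\<lambda>y. f y - g y) (\<lambda>y. f' y - g' y)"
  unfolding ld_def by (auto intro!: derivative_eq_intros)

lemma ld_minus: "ld a f f' \<Longrightarrow> ld a (\<lambda>y. - f y) (\<lambda>y. - f' y)"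
  unfolding ld_def by (auto intro!: derivative_eq_intros)

lemma ld_mult: "ld a f f' \<Longrightarrow> ld a g g' \<Longrightarrow> ld a (\<lambda>y. f y * g y) (\<lambda>y. f' y * g y + f y * g' y)"
  unfolding ld_def by (auto intro!: derivative_eq_intros)

lemma ld_cmult: "ld a f f' \<Longrightarrow> ld a (\<lambda>y. c * f y) (\<lambda>y. c * f' y)"
  unfolding ld_def by (auto intro!: derivative_eq_intros)

lemma ld_sum: "(\<And>i. i \<in> S \<Longrightarrow> ld a (f i) (f' i)) \<Longrightarrow> ld a (\<lambda>y. \<Sum>i\<in>S. f i y) (\<lambda>y. \<Sum>i\<in>S. f' i y)"
  unfolding ld_def by (auto intro!: DERIV_sum)

lemma ld_cong: "ld a f f' \<Longrightarrow> (\<And>y. f y = g y) \<Longrightarrow> (\<And>y. f' y = g' y) \<Longrightarrow> ld a g g'"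
proof -
  assume "ld a f f'" "\<And>y. f y = g y" "\<And>y. f' y = g' y"
  then have "f = g" "f' = g'" by auto
  then show ?thesis using \<open>ld a f f'\<close> by simp
qed

lemma has_pd_ld: "(\<And>x. has_pd a f x) \<Longrightarrow> ld a f (pd a f)"
  unfolding ld_def has_pd_def pd_def
  by (simp add: DERIV_deriv_iff_real_differentiable)

lemma diff_ld:
  fixes f :: "real^'n::finite \<Rightarrow> real" and a :: 'n
  assumes "\<And>x. f differentiable (at x)"
  shows "ld a f (pd a f)"
proof (rule has_pd_ld)
  fix x :: "real^'n"
  have "(\<lambda>s::real. x + s *\<^sub>R axis a 1) differentiable (at 0)"
    by (auto intro!: derivative_intros)
  moreover have "f differentiable (at ((\<lambda>s::real. x + s *\<^sub>R axis a (1::real)) 0))"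
    using assms by blast
  ultimately have "(f \<circ> (\<lambda>s::real. x + s *\<^sub>R axis a 1)) differentiable (at 0)"
    by (rule differentiable_chain_at)
  then show "has_pd a f x" unfolding has_pd_def o_def by simp
qed

lemma mm_diff_l: "(A::real^'n^'m) ** (B - C) = A ** B - A ** (C::real^'k^'n)"
  by (simp add: vec_eq_iff matrix_matrix_mult_def sum_subtractf algebra_simps)

lemma mm_diff_r: "((B::real^'n^'m) - C) ** (A::real^'k^'n) = B ** A - C ** A"
  by (simp add: vec_eq_iff matrix_matrix_mult_def sum_subtractf algebra_simps)

lemma mm_add_r: "((B::real^'n^'m) + C) ** (A::real^'k^'n) = B ** A + C ** A"
  by (simp add: vec_eq_iff matrix_matrix_mult_def sum.distrib algebra_simps)

lemma mm_entry: "((A::real^'n^'m) ** (B::real^'k^'n)) $ i $ j = (\<Sum>k\<in>UNIV. A $ i $ k * B $ k $ j)"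
  by (simp add: matrix_matrix_mult_def)

lemma norm_sq_vec_gen: "(norm (x::'a::real_inner^'n))\<^sup>2 = (\<Sum>i\<in>UNIV. (norm (x $ i))\<^sup>2)"
  by (simp add: power2_norm_eq_inner inner_vec_def)

lemma norm_sq_vec: "(norm (x::real^'n))\<^sup>2 = (\<Sum>i\<in>UNIV. (x $ i)\<^sup>2)"
  by (simp add: norm_sq_vec_gen)

lemma norm_sq_mat: "(norm (x::real^'n^'m))\<^sup>2 = (\<Sum>i\<in>UNIV. \<Sum>j\<in>UNIV. (x $ i $ j)\<^sup>2)"
  by (simp add: norm_sq_vec_gen norm_sq_vec)

lemma mat_entry_le: "\<bar>(A::real^'n^'m) $ i $ j\<bar> \<le> norm A"
proof -
  have "\<bar>A $ i $ j\<bar> \<le> norm (A $ i)" by (rule component_le_norm_cart)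
  also have "\<dots> \<le> norm A" by (rule Finite_Cartesian_Product.norm_nth_le)
  finally show ?thesis .
qed

lemma norm_mv_le: "norm ((A::real^'n^'m) *v v) \<le> norm A * norm v"
proof -
  have "(norm (A *v v))\<^sup>2 = (\<Sum>i\<in>UNIV. ((A $ i) \<bullet> v)\<^sup>2)"
    by (simp add: norm_sq_vec matrix_vector_mul_component)
  also have "\<dots> \<le> (\<Sum>i\<in>UNIV. (norm (A $ i))\<^sup>2 * (norm v)\<^sup>2)"
  proof (rule sum_mono)
    fix i
    have "\<bar>A $ i \<bullet> v\<bar> \<le> norm (A $ i) * norm v" by (rule Cauchy_Schwarz_ineq2)
    then show "(A $ i \<bullet> v)\<^sup>2 \<le> (norm (A $ i))\<^sup>2 * (norm v)\<^sup>2"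
      by (metis abs_ge_zero power2_abs power_mono power_mult_distrib)
  qed
  also have "\<dots> = (norm A * norm v)\<^sup>2"
    by (simp add: norm_sq_vec_gen power_mult_distrib sum_distrib_right)
  finally show ?thesis
    by (meson mult_nonneg_nonneg norm_ge_zero power2_le_imp_le)
qed

lemma inv_I_plus:
  fixes A :: "real^'n^'n"
  assumes "norm A \<le> 1/2"
  shows "(mat 1 + A) ** matrix_inv (mat 1 + A) = mat 1"
    "matrix_inv (mat 1 + A) ** (mat 1 + A) = mat 1"
    "\<And>i j. \<bar>matrix_inv (mat 1 + A) $ i $ j\<bar> \<le> 2"
proof -
  let ?M = "mat 1 + A"
  have ker: "\<forall>x. ?M *v x = 0 \<longrightarrow> x = 0"
  proof (intro allI impI)
    fix x assume "?M *v x = 0"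
    then have "x = - (A *v x)"
      by (simp add: matrix_vector_mult_add_rdistrib eq_neg_iff_add_eq_0)
    then have "norm x \<le> norm A * norm x"
      using norm_mv_le[of A x] by (metis norm_minus_cancel)
    then have "norm x \<le> 1/2 * norm x"
      using assms by (smt (verit) mult_right_mono norm_ge_zero)
    then show "x = 0" by simp
  qed
  then have "invertible ?M"
    using matrix_left_invertible_ker invertible_left_inverse by blast
  then obtain A' where "?M ** A' = mat 1 \<and> A' ** ?M = mat 1"
    unfolding invertible_def by blast
  then have inv: "?M ** matrix_inv ?M = mat 1 \<and> matrix_inv ?M ** ?M = mat 1"
    unfolding matrix_inv_def by (rule someI)
  then show "?M ** matrix_inv ?M = mat 1" "matrix_inv ?M ** ?M = mat 1" by auto
  fix i j
  let ?w = "matrix_inv ?M *v axis j 1"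
  have "?M *v ?w = axis j 1"
    using inv by (simp add: matrix_vector_mul_assoc)
  then have "?w + A *v ?w = axis j 1"
    by (simp add: matrix_vector_mult_add_rdistrib)
  then have "norm ?w \<le> norm (axis j (1::real)) + norm (A *v ?w)"
    by (metis add_diff_cancel_right' norm_triangle_ineq4)
  also have "\<dots> \<le> 1 + 1/2 * norm ?w"
    using norm_mv_le[of A ?w] assms
    by (smt (verit) mult_right_mono norm_axis_1 norm_ge_zero)
  finally have "norm ?w \<le> 2" by simp
  moreover have "?w $ i = matrix_inv ?M $ i $ j"
  proof -
    have "(\<Sum>k\<in>UNIV. matrix_inv ?M $ i $ k * (axis j 1::real^'n) $ k) = (\<Sum>k\<in>UNIV. if k = j then matrix_inv ?M $ i $ j else 0)"
      by (rule sum.cong) (auto simp: axis_def)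
    then show ?thesis by (simp add: matrix_vector_mult_def)
  qed
  ultimately show "\<bar>matrix_inv ?M $ i $ j\<bar> \<le> 2"
    by (metis component_le_norm_cart order_trans)
qed

abbreviation minv :: "real^'n^'n \<Rightarrow> real^'n^'n::finite" where
  "minv A \<equiv> matrix_inv (mat 1 + A)"

lemma inv_diff:
  fixes A C :: "real^'n^'n"
  assumes "norm A \<le> 1/2" "norm C \<le> 1/2"
  shows "minv A $ p $ q - minv C $ p $ q =
     (\<Sum>u\<in>UNIV. \<Sum>r\<in>UNIV. minv A $ p $ r * (C $ r $ u - A $ r $ u) * minv C $ u $ q)"
proof -
  have "minv A ** (C - A) ** minv C = minv A - minv C"
  proof -
    have "C - A = (mat 1 + C) - (mat 1 + A)" by simp
    then have "minv A ** (C - A) ** minv C = (minv A ** (mat 1 + C) - minv A ** (mat 1 + A)) ** minv C"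
      by (simp only: mm_diff_l)
    also have "\<dots> = minv A ** ((mat 1 + C) ** minv C) - mat 1 ** minv C"
      using inv_I_plus(2)[OF assms(1)] by (simp add: mm_diff_r matrix_mul_assoc)
    also have "\<dots> = minv A - minv C"
      using inv_I_plus(1)[OF assms(2)] by simp
    finally show ?thesis .
  qed
  then have "minv A $ p $ q - minv C $ p $ q = (minv A ** (C - A) ** minv C) $ p $ q" by simp
  also have "\<dots> = (\<Sum>u\<in>UNIV. (\<Sum>r\<in>UNIV. minv A $ p $ r * (C $ r $ u - A $ r $ u)) * minv C $ u $ q)"
    by (simp add: mm_entry)
  also have "\<dots> = (\<Sum>u\<in>UNIV. \<Sum>r\<in>UNIV. minv A $ p $ r * (C $ r $ u - A $ r $ u) * minv C $ u $ q)"
    by (simp add: sum_distrib_right)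
  finally show ?thesis .
qed

lemma inv_tendsto:
  fixes Af :: "'a \<Rightarrow> real^'n^'n" and A0 :: "real^'n^'n"
  assumes n: "\<And>z. norm (Af z) \<le> 1/2" "norm A0 \<le> 1/2"
    and lim: "\<And>i j. ((\<lambda>z. Af z $ i $ j) \<longlongrightarrow> A0 $ i $ j) F"
  shows "((\<lambda>z. minv (Af z) $ p $ q) \<longlongrightarrow> minv A0 $ p $ q) F"
proof -
  have "((\<lambda>z. minv (Af z) $ p $ q - minv A0 $ p $ q) \<longlongrightarrow> 0) F"
  proof (rule Lim_null_comparison)
    show "\<forall>\<^sub>F z in F. norm (minv (Af z) $ p $ q - minv A0 $ p $ q)
       \<le> (\<Sum>u\<in>UNIV. \<Sum>r\<in>UNIV. 4 * \<bar>A0 $ r $ u - Af z $ r $ u\<bar>)"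
    proof (rule always_eventually, rule allI)
      fix z
      have "norm (minv (Af z) $ p $ q - minv A0 $ p $ q) =
        \<bar>\<Sum>u\<in>UNIV. \<Sum>r\<in>UNIV. minv (Af z) $ p $ r * (A0 $ r $ u - Af z $ r $ u) * minv A0 $ u $ q\<bar>"
        using inv_diff[OF n(1)[of z] n(2)] by simp
      also have "\<dots> \<le> (\<Sum>u\<in>UNIV. \<Sum>r\<in>UNIV. \<bar>minv (Af z) $ p $ r * (A0 $ r $ u - Af z $ r $ u) * minv A0 $ u $ q\<bar>)"
        by (rule order_trans[OF sum_abs sum_mono]) (rule sum_abs)
      also have "\<dots> \<le> (\<Sum>u\<in>UNIV. \<Sum>r\<in>UNIV. 4 * \<bar>A0 $ r $ u - Af z $ r $ u\<bar>)"
      proof (intro sum_mono)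
        fix u r
        have a: "\<bar>minv (Af z) $ p $ r\<bar> \<le> 2" "\<bar>minv A0 $ u $ q\<bar> \<le> 2"
          using inv_I_plus(3) n by auto
        have "\<bar>minv (Af z) $ p $ r * (A0 $ r $ u - Af z $ r $ u) * minv A0 $ u $ q\<bar>
          = \<bar>minv (Af z) $ p $ r\<bar> * \<bar>minv A0 $ u $ q\<bar> * \<bar>A0 $ r $ u - Af z $ r $ u\<bar>"
          by (simp add: abs_mult)
        also have "\<dots> \<le> 2 * 2 * \<bar>A0 $ r $ u - Af z $ r $ u\<bar>"
          by (intro mult_right_mono mult_mono a) auto
        finally show "\<bar>minv (Af z) $ p $ r * (A0 $ r $ u - Af z $ r $ u) * minv A0 $ u $ q\<bar>
          \<le> 4 * \<bar>A0 $ r $ u - Af z $ r $ u\<bar>" by simp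
      qed
      finally show "norm (minv (Af z) $ p $ q - minv A0 $ p $ q)
       \<le> (\<Sum>u\<in>UNIV. \<Sum>r\<in>UNIV. 4 * \<bar>A0 $ r $ u - Af z $ r $ u\<bar>)" .
    qed
    have "((\<lambda>z. \<Sum>u\<in>UNIV. \<Sum>r\<in>UNIV. 4 * \<bar>A0 $ r $ u - Af z $ r $ u\<bar>) \<longlongrightarrow>
          (\<Sum>u\<in>(UNIV::'n set). \<Sum>r\<in>(UNIV::'n set). 4 * \<bar>A0 $ r $ u - A0 $ r $ u\<bar>)) F"
      by (intro tendsto_intros lim)
    then show "((\<lambda>z. \<Sum>u\<in>UNIV. \<Sum>r\<in>UNIV. 4 * \<bar>A0 $ r $ u - Af z $ r $ u\<bar>) \<longlongrightarrow> 0) F"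
      by simp
  qed
  then show ?thesis by (simp add: LIM_zero_iff)
qed

lemma inv_deriv:
  fixes Af :: "real \<Rightarrow> real^'n^'n" and D :: "real^'n^'n"
  assumes n: "\<And>z. norm (Af z) \<le> 1/2"
    and der: "\<And>i j. ((\<lambda>s. Af s $ i $ j) has_real_derivative D $ i $ j) (at s0)"
  shows "((\<lambda>s. minv (Af s) $ p $ q) has_real_derivative
     - (\<Sum>u\<in>UNIV. \<Sum>r\<in>UNIV. minv (Af s0) $ p $ r * D $ r $ u * minv (Af s0) $ u $ q)) (at s0)"
proof -
  let ?N = "\<lambda>s. minv (Af s)"
  have cont: "((\<lambda>h. Af (s0 + h) $ i $ j) \<longlongrightarrow> Af s0 $ i $ j) (at 0)" for i j
  proof -
    have "isCont (\<lambda>s. Af s $ i $ j) s0" using der[of i j] by (rule DERIV_isCont)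
    then have "((\<lambda>s. Af s $ i $ j) \<longlongrightarrow> Af s0 $ i $ j) (at s0)" by (simp add: isCont_def)
    then show ?thesis by (rule LIM_offset_zero)
  qed
  have Ncont: "((\<lambda>h. ?N (s0 + h) $ p $ r) \<longlongrightarrow> ?N s0 $ p $ r) (at 0)" for r
    by (rule inv_tendsto[where Af="\<lambda>h. Af (s0 + h)"]) (use n cont in auto)
  have Dq: "((\<lambda>h. (Af s0 $ r $ u - Af (s0 + h) $ r $ u) / h) \<longlongrightarrow> - D $ r $ u) (at 0)" for r u
  proof -
    have "((\<lambda>h. (Af (s0 + h) $ r $ u - Af s0 $ r $ u) / h) \<longlongrightarrow> D $ r $ u) (at 0)"
      using der[of r u] by (simp add: DERIV_def)
    then have "((\<lambda>h. - ((Af (s0 + h) $ r $ u - Af s0 $ r $ u) / h)) \<longlongrightarrow> - D $ r $ u) (at 0)"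
      by (rule tendsto_minus)
    then show ?thesis by (simp add: minus_divide_left)
  qed
  have eq: "(?N (s0 + h) $ p $ q - ?N s0 $ p $ q) / h =
     (\<Sum>u\<in>UNIV. \<Sum>r\<in>UNIV. ?N (s0 + h) $ p $ r * ((Af s0 $ r $ u - Af (s0 + h) $ r $ u) / h) * ?N s0 $ u $ q)" for h
    using inv_diff[where A="Af (s0 + h)" and C="Af s0" and p=p and q=q] n
    by (simp add: sum_divide_distrib)
  have "((\<lambda>h. \<Sum>u\<in>UNIV. \<Sum>r\<in>UNIV. ?N (s0 + h) $ p $ r * ((Af s0 $ r $ u - Af (s0 + h) $ r $ u) / h) * ?N s0 $ u $ q)
     \<longlongrightarrow> (\<Sum>u\<in>UNIV. \<Sum>r\<in>UNIV. ?N s0 $ p $ r * (- D $ r $ u) * ?N s0 $ u $ q)) (at 0)"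
    by (intro tendsto_intros Ncont Dq)
  then have "((\<lambda>h. (?N (s0 + h) $ p $ q - ?N s0 $ p $ q) / h)
     \<longlongrightarrow> - (\<Sum>u\<in>UNIV. \<Sum>r\<in>UNIV. ?N s0 $ p $ r * D $ r $ u * ?N s0 $ u $ q)) (at 0)"
    by (simp only: eq) (simp add: sum_negf)
  then show ?thesis by (simp add: DERIV_def)
qed

definition bx :: "real \<Rightarrow> (real^'n::finite) set" where
  "bx k = cbox (\<chi> i. - k) (\<chi> i. k)"

lemma in_shift_box:
  fixes y c :: "real^'n::finite"
  assumes "norm (y - c) \<le> k"
  shows "y \<in> cbox ((\<chi> i. - k) + c) ((\<chi> i. k) + c)"
proof -
  have "\<bar>y $ i - c $ i\<bar> \<le> k" for i
    using component_le_norm_cart[of "y - c" i] assms by simp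
  then show ?thesis unfolding mem_box_cart
  proof -
    assume h: "\<And>i. \<bar>y $ i - c $ i\<bar> \<le> k"
    show "\<forall>i. ((\<chi> i. - k) + c) $ i \<le> y $ i \<and> y $ i \<le> ((\<chi> i. k) + c) $ i"
    proof
      fix i show "((\<chi> i. - k) + c) $ i \<le> y $ i \<and> y $ i \<le> ((\<chi> i. k) + c) $ i"
        using h[of i] by (simp add: abs_le_iff)
    qed
  qed
qed

lemma in_bx: "norm (y::real^'n::finite) \<le> k \<Longrightarrow> y \<in> bx k"
  using in_shift_box[of y 0 k] by (simp add: bx_def)

lemma supp_integral:
  fixes F :: "real^'n::finite \<Rightarrow> real"
  assumes "\<And>x. x \<notin> S \<Longrightarrow> F x = 0"
  shows "integral S F = integral UNIV F"
proof -
  have "(\<lambda>x. if x \<in> S then F x else 0) = F" using assms by auto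
  then show ?thesis using integral_restrict_UNIV[of S F] by simp
qed

lemma supp_integrable:
  fixes F :: "real^'n::finite \<Rightarrow> real"
  assumes "\<And>x. x \<notin> S \<Longrightarrow> F x = 0"
  shows "F integrable_on S \<longleftrightarrow> F integrable_on UNIV"
proof -
  have "(\<lambda>x. if x \<in> S then F x else 0) = F" using assms by auto
  then show ?thesis using integrable_restrict_UNIV[of S F] by simp
qed

lemma ibp:
  fixes F F' :: "real^'n::finite \<Rightarrow> real"
  assumes d: "ld a F F'" and cF: "continuous_on UNIV F" and cF': "continuous_on UNIV F'"
    and supp: "\<And>y. \<rho> \<le> norm y \<Longrightarrow> F y = 0" and k: "\<rho> + 1 \<le> k"
  shows "integral (bx k) F' = 0"
proof -
  define e :: "real^'n" where "e = axis a 1"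
  define \<Phi> where "\<Phi> s = integral (bx k) (\<lambda>x. F (x + s *\<^sub>R e))" for s
  have ne: "norm e = 1" by (simp add: e_def)
  have intF: "integral (bx k) F = integral UNIV F"
  proof (rule supp_integral)
    fix x :: "real^'n" assume "x \<notin> bx k"
    then have "\<not> norm x \<le> k" using in_bx by blast
    then show "F x = 0" using supp k by simp
  qed
  have const: "\<Phi> s = integral (bx k) F" if "\<bar>s\<bar> < 1" for s
  proof -
    let ?c = "s *\<^sub>R e"
    have "continuous_on (cbox ((\<chi> i. - k) + ?c) ((\<chi> i. k) + ?c)) F"
      using cF continuous_on_subset by blast
    then have "(F has_integral integral (cbox ((\<chi> i. - k) + ?c) ((\<chi> i. k) + ?c)) F)
       (cbox ((\<chi> i. - k) + ?c) ((\<chi> i. k) + ?c))"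
      using integrable_continuous integrable_integral by blast
    then have "((F \<circ> (+) ?c) has_integral integral (cbox ((\<chi> i. - k) + ?c) ((\<chi> i. k) + ?c)) F) (bx k)"
      unfolding bx_def by (simp add: has_integral_shift_cbox_iff)
    moreover have "integral (cbox ((\<chi> i. - k) + ?c) ((\<chi> i. k) + ?c)) F = integral UNIV F"
    proof (rule supp_integral)
      fix x assume "x \<notin> cbox ((\<chi> i. - k) + ?c) ((\<chi> i. k) + ?c)"
      then have "\<not> norm (x - ?c) \<le> k" using in_shift_box by blast
      moreover have "norm (x - ?c) \<le> norm x + \<bar>s\<bar>" using norm_triangle_ineq4[of x ?c] ne by simp
      ultimately show "F x = 0" using supp k that by force
    qed
    ultimately have "((\<lambda>x. F (x + ?c)) has_integral integral UNIV F) (bx k)"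
      by (simp add: o_def add.commute)
    then show ?thesis unfolding \<Phi>_def intF by (rule integral_unique)
  qed
  have U: "0 \<in> ball (0::real) 1" "convex (ball (0::real) 1)" by auto
  have "(\<Phi> has_field_derivative integral (bx k) (\<lambda>x. F' (x + 0 *\<^sub>R e))) (at 0 within ball 0 1)"
    unfolding \<Phi>_def bx_def
  proof (rule leibniz_rule_field_derivative[OF _ _ _ U])
    fix s x
    show "((\<lambda>s. F (x + s *\<^sub>R e)) has_field_derivative F' (x + s *\<^sub>R e)) (at s within ball 0 1)"
      using ld_at[OF d, of x s] unfolding e_def by (rule has_field_derivative_at_within)
  next
    fix s :: real
    have "continuous_on UNIV (\<lambda>x. F (x + s *\<^sub>R e))"
      by (intro continuous_on_compose2[OF cF] continuous_intros) auto
    then show "(\<lambda>x. F (x + s *\<^sub>R e)) integrable_on cbox (\<chi> i. - k) (\<chi> i. k)"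
      using integrable_continuous continuous_on_subset by blast
  next
    show "continuous_on (ball 0 1 \<times> cbox (\<chi> i. - k) (\<chi> i. k)) (\<lambda>(s, x). F' (x + s *\<^sub>R e))"
    proof -
      have "continuous_on UNIV (\<lambda>p::real \<times> (real^'n). snd p + fst p *\<^sub>R e)"
        by (intro continuous_intros)
      then have "continuous_on UNIV (\<lambda>p::real \<times> (real^'n). F' (snd p + fst p *\<^sub>R e))"
        using continuous_on_compose2[OF cF'] by blast
      then show ?thesis unfolding split_beta using continuous_on_subset by blast
    qed
  qed
  then have "(\<Phi> has_field_derivative integral (bx k) F') (at 0)"
    using at_within_open[of 0 "ball (0::real) 1"] by simp
  moreover have "\<forall>y. \<bar>0 - y\<bar> < 1 \<longrightarrow> \<Phi> 0 = \<Phi> y" using const by simp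
  ultimately show ?thesis using DERIV_local_const[of \<Phi> _ 0 1] by auto
qed

lemma csupp_zero:
  fixes f :: "real^'n::finite \<Rightarrow> real"
  assumes "csupp f \<subseteq> ball 0 r" "r \<le> norm z"
  shows "f z = 0"
proof (rule ccontr)
  assume "f z \<noteq> 0"
  then have "z \<in> {x. f x \<noteq> 0}" by simp
  then have "z \<in> csupp f" unfolding csupp_def by (rule closure_subset[THEN subsetD])
  then have "z \<in> ball 0 r" by (rule subsetD[OF assms(1)])
  then show False using assms(2) by simp
qed

lemma diff_cont: "(\<And>x. f differentiable (at x)) \<Longrightarrow> continuous_on UNIV f"
  by (simp add: continuous_at_imp_continuous_on differentiable_imp_continuous_within)

lemma bounded_cont_supp:
  fixes f :: "real^'n::finite \<Rightarrow> real"
  assumes "continuous_on UNIV f" "\<And>z. 2 \<le> norm z \<Longrightarrow> f z = 0"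
  shows "\<exists>B\<ge>0. \<forall>z. \<bar>f z\<bar> \<le> B"
proof -
  have "compact (f ` cball 0 2)"
    using assms(1) by (intro compact_continuous_image) (auto intro: continuous_on_subset)
  then have "bounded (f ` cball 0 2)" by (rule compact_imp_bounded)
  then obtain B where B: "\<forall>x\<in>f ` cball 0 2. norm x \<le> B"
    unfolding bounded_iff by blast
  show ?thesis
  proof (intro exI[of _ "\<bar>B\<bar>"] conjI allI)
    fix z
    show "\<bar>f z\<bar> \<le> \<bar>B\<bar>"
    proof (cases "norm z \<le> 2")
      case True
      then have "norm (f z) \<le> B" using B by simp
      then show ?thesis by simp
    next
      case False then show ?thesis using assms(2)[of z] by simp
    qed
  qed simp
qed

locale cut =
  fixes c :: real and \<eta> :: "real^'n::finite \<Rightarrow> real"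
  assumes co: "cutoff c \<eta>"
begin

definition "\<phi> y = sqrt (\<eta> y)"

lemma eta_diff: "\<eta> differentiable (at x)"
proof -
  have "iter_pd [] \<eta> differentiable (at x)" using co unfolding cutoff_def smooth_def by blast
  then show ?thesis by simp
qed

lemma eta_cont: "continuous_on UNIV \<eta>"
  using eta_diff diff_cont by blast

lemma eta_ld: "ld a \<eta> (pd a \<eta>)"
  using eta_diff diff_ld by blast

lemma deta_cont: "continuous_on UNIV (pd a \<eta>)"
proof -
  have "\<And>x. pd a \<eta> differentiable (at x)"
  proof -
    fix x
    have "iter_pd [a] \<eta> differentiable (at x)" using co unfolding cutoff_def smooth_def by blast
    then show "pd a \<eta> differentiable (at x)" by simp
  qed
  then show ?thesis using diff_cont by blast
qed

lemma eta_range: "0 \<le> \<eta> x" "\<eta> x \<le> 1"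
  using co unfolding cutoff_def by auto

lemma eta_zero: "2 \<le> norm z \<Longrightarrow> \<eta> z = 0"
  using co csupp_zero unfolding cutoff_def by blast

lemma phi_ld: "ld a \<phi> (pd a \<phi>)"
proof -
  have "\<And>x. \<phi> differentiable (at x)"
    using co unfolding cutoff_def \<phi>_def[abs_def] by blast
  then show ?thesis using diff_ld by blast
qed

lemma dphi_cont: "continuous_on UNIV (pd a \<phi>)"
proof -
  have "\<And>x. pd a \<phi> differentiable (at x)"
  proof -
    fix x
    have "smooth (pd a (\<lambda>y. sqrt (\<eta> y)))" using co unfolding cutoff_def by blast
    then have "iter_pd [] (pd a (\<lambda>y. sqrt (\<eta> y))) differentiable (at x)" unfolding smooth_def by blast
    then show "pd a \<phi> differentiable (at x)" by (simp add: \<phi>_def[abs_def])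
  qed
  then show ?thesis using diff_cont by blast
qed

lemma dphi_zero: "2 \<le> norm z \<Longrightarrow> pd a \<phi> z = 0"
  using co csupp_zero unfolding cutoff_def \<phi>_def[abs_def] by blast

lemma dphi_bound: "\<exists>M\<ge>0. \<forall>a z. \<bar>pd a \<phi> z\<bar> \<le> M"
proof -
  have "\<forall>a. \<exists>B\<ge>0. \<forall>z. \<bar>pd a \<phi> z\<bar> \<le> B"
    using bounded_cont_supp[OF dphi_cont dphi_zero] by blast
  then obtain B where B: "\<And>a. B a \<ge> 0" "\<And>a z. \<bar>pd a \<phi> z\<bar> \<le> B a" by metis
  have "\<bar>pd a \<phi> z\<bar> \<le> (\<Sum>a\<in>UNIV. B a)" for a z
    using B(2)[of a z] member_le_sum[of a UNIV B] B(1) by force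
  moreover have "(\<Sum>a\<in>UNIV. B a) \<ge> 0" using B(1) by (simp add: sum_nonneg)
  ultimately show ?thesis by blast
qed

lemma deta_phi: "pd a \<eta> z = 2 * \<phi> z * pd a \<phi> z"
proof -
  have "ld a (\<lambda>y. \<phi> y * \<phi> y) (\<lambda>y. pd a \<phi> y * \<phi> y + \<phi> y * pd a \<phi> y)"
    by (rule ld_mult[OF phi_ld phi_ld])
  moreover have "\<phi> y * \<phi> y = \<eta> y" for y
    unfolding \<phi>_def using eta_range[of y] by simp
  ultimately have "ld a \<eta> (\<lambda>y. pd a \<phi> y * \<phi> y + \<phi> y * pd a \<phi> y)"
    by (rule ld_cong) auto
  then show ?thesis using ld_pd by fastforce
qed

lemma deta_inner: "norm z < 1 \<Longrightarrow> pd a \<eta> z = 0"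
proof -
  assume z: "norm z < 1"
  have d: "((\<lambda>s. \<eta> (z + s *\<^sub>R axis a 1)) has_real_derivative pd a \<eta> z) (at 0)"
    using eta_ld unfolding ld_def by blast
  have "\<forall>y. \<bar>0 - y\<bar> < 1 - norm z \<longrightarrow> \<eta> (z + 0 *\<^sub>R axis a 1) = \<eta> (z + y *\<^sub>R axis a 1)"
  proof (intro allI impI)
    fix y :: real assume "\<bar>0 - y\<bar> < 1 - norm z"
    then have "norm (z + y *\<^sub>R axis a 1) < 1"
      using norm_triangle_ineq[of z "y *\<^sub>R axis a 1"] by simp
    then show "\<eta> (z + 0 *\<^sub>R axis a 1) = \<eta> (z + y *\<^sub>R axis a 1)"
      using co z unfolding cutoff_def by simp
  qed
  then show ?thesis using DERIV_local_const[OF d, of "1 - norm z"] z by simp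
qed

definition "E R y = etaR \<eta> R y"
definition "dE R a y = (1/R) * pd a \<eta> ((1/R) *\<^sub>R y)"

lemma E_ld:
  assumes "R > 0"
  shows "ld a (E R) (dE R a)"
  unfolding ld_def
proof
  fix y :: "real^'n"
  let ?z = "(1/R) *\<^sub>R y"
  have d: "((\<lambda>u. \<eta> (?z + u *\<^sub>R axis a 1)) has_real_derivative pd a \<eta> ?z) (at ((\<lambda>s. s / R) 0))"
    using eta_ld unfolding ld_def by simp
  have "((\<lambda>s. s / R) has_real_derivative 1 / R) (at 0)"
    using assms by (auto intro!: derivative_eq_intros)
  from DERIV_chain2[OF d this]
  have "((\<lambda>s. \<eta> (?z + (s / R) *\<^sub>R axis a 1)) has_real_derivative pd a \<eta> ?z * (1/R)) (at 0)" .
  moreover have "?z + (s / R) *\<^sub>R axis a 1 = (1/R) *\<^sub>R (y + s *\<^sub>R axis a 1)" for s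
    using assms by (simp add: scaleR_add_right divide_inverse_commute)
  ultimately show "((\<lambda>s. E R (y + s *\<^sub>R axis a 1)) has_real_derivative dE R a y) (at 0)"
    unfolding E_def etaR_def dE_def using assms by (simp add: mult.commute)
qed

lemma E_cont: "continuous_on UNIV (E R)"
  unfolding E_def[abs_def] etaR_def
  by (intro continuous_on_compose2[OF eta_cont] continuous_intros) auto

lemma dE_cont: "continuous_on UNIV (dE R a)"
  unfolding dE_def[abs_def]
  by (intro continuous_intros continuous_on_compose2[OF deta_cont]) auto

lemma E_range: "0 \<le> E R y" "E R y \<le> 1"
  unfolding E_def etaR_def using eta_range by auto

lemma E_zero: "R > 0 \<Longrightarrow> 2 * R \<le> norm y \<Longrightarrow> E R y = 0"
  unfolding E_def etaR_def by (rule eta_zero) (simp add: field_simps)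

lemma dE_bound:
  assumes R: "R > 0" and M: "\<And>a z. \<bar>pd a \<phi> z\<bar> \<le> M"
  shows "\<bar>dE R a y\<bar> \<le> 2 * M / R * sqrt (E R y) * (if y \<in> ball 0 (2*R) - ball 0 R then 1 else 0)"
proof -
  let ?z = "(1/R) *\<^sub>R y"
  have nz: "norm ?z = norm y / R" using R by simp
  show ?thesis
  proof (cases "y \<in> ball 0 (2*R) - ball 0 R")
    case True
    have "\<bar>dE R a y\<bar> = (1/R) * (2 * \<phi> ?z * \<bar>pd a \<phi> ?z\<bar>)"
      unfolding dE_def deta_phi using R eta_range[of ?z] by (simp add: abs_mult \<phi>_def)
    also have "\<dots> \<le> (1/R) * (2 * \<phi> ?z * M)"
      using R M eta_range[of ?z] by (intro mult_left_mono) (auto simp: \<phi>_def)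
    also have "\<dots> = 2 * M / R * sqrt (E R y)"
      by (simp add: \<phi>_def E_def etaR_def)
    finally show ?thesis using True by simp
  next
    case False
    then have "norm y < R \<or> 2 * R \<le> norm y" by auto
    then have "pd a \<eta> ?z = 0"
    proof
      assume "norm y < R" then show ?thesis using deta_inner nz R by (simp add: field_simps)
    next
      assume "2 * R \<le> norm y" then have "2 \<le> norm ?z" using nz R by (simp add: field_simps)
      then show ?thesis using deta_phi dphi_zero by simp
    qed
    then have "dE R a y = 0" by (simp add: dE_def)
    moreover have "(if y \<in> ball 0 (2*R) - ball 0 R then 1 else 0) = (0::real)"
      using False by (simp only: if_False)
    ultimately show ?thesis by (simp only:)
  qed
qed

end

lemma sum_bound:
  fixes f :: "'a::finite \<Rightarrow> real"
  assumes "\<And>x. \<bar>f x\<bar> \<le> K"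
  shows "\<bar>\<Sum>x\<in>UNIV. f x\<bar> \<le> real CARD('a) * K"
proof -
  have "\<bar>\<Sum>x\<in>UNIV. f x\<bar> \<le> (\<Sum>x\<in>UNIV. \<bar>f x\<bar>)" by (rule sum_abs)
  also have "\<dots> \<le> (\<Sum>x\<in>(UNIV::'a set). K)" by (rule sum_mono) (rule assms)
  finally show ?thesis by simp
qed

lemma prod_le: "x\<^sup>2 \<le> g \<Longrightarrow> y\<^sup>2 \<le> g \<Longrightarrow> \<bar>x * y\<bar> \<le> (g::real)"
proof -
  assume "x\<^sup>2 \<le> g" "y\<^sup>2 \<le> g"
  moreover have "2 * \<bar>x * y\<bar> \<le> x\<^sup>2 + y\<^sup>2"
  proof -
    have "0 \<le> (\<bar>x\<bar> - \<bar>y\<bar>)\<^sup>2" by simp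
    then show ?thesis by (simp add: power2_eq_square abs_mult algebra_simps)
  qed
  ultimately show ?thesis by linarith
qed

definition gsq :: "(real^'n \<Rightarrow> real^'n^'n) \<Rightarrow> real^'n \<Rightarrow> real" where
  "gsq H y = (\<Sum>a\<in>UNIV. \<Sum>i\<in>UNIV. \<Sum>j\<in>UNIV. (Dh H a i j y)\<^sup>2)"

lemma gsq_nonneg: "0 \<le> gsq H y"
  unfolding gsq_def by (intro sum_nonneg) auto

lemma Dh_sq_le: "(Dh H a i j y)\<^sup>2 \<le> gsq H y"
proof -
  have "(Dh H a i j y)\<^sup>2 \<le> (\<Sum>j\<in>UNIV. (Dh H a i j y)\<^sup>2)"
    by (rule member_le_sum) auto
  also have "\<dots> \<le> (\<Sum>i\<in>UNIV. \<Sum>j\<in>UNIV. (Dh H a i j y)\<^sup>2)"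
    by (rule member_le_sum[where f="\<lambda>i. \<Sum>j\<in>UNIV. (Dh H a i j y)\<^sup>2"]) (auto intro: sum_nonneg)
  also have "\<dots> \<le> gsq H y" unfolding gsq_def
    by (rule member_le_sum[where f="\<lambda>a. \<Sum>i\<in>UNIV. \<Sum>j\<in>UNIV. (Dh H a i j y)\<^sup>2"]) (auto intro!: sum_nonneg)
  finally show ?thesis .
qed

lemma DD_le: "\<bar>Dh H a i j y * Dh H b k l y\<bar> \<le> gsq H y"
  by (rule prod_le[OF Dh_sq_le Dh_sq_le])

locale slice =
  fixes H :: "real^'n::finite \<Rightarrow> real^'n^'n" and B :: real
  assumes nb: "\<And>y. norm (H y) \<le> B" and B: "B \<le> 1/2"
    and hd: "\<And>a i j. ld a (\<lambda>y. H y $ i $ j) (Dh H a i j)"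
    and hdd: "\<And>a b i j. ld b (Dh H a i j) (pd b (Dh H a i j))"
    and ch: "\<And>i j. continuous_on UNIV (\<lambda>y. H y $ i $ j)"
    and cdh: "\<And>a i j. continuous_on UNIV (Dh H a i j)"
    and cddh: "\<And>a b i j. continuous_on UNIV (pd b (Dh H a i j))"
begin

abbreviation "N y \<equiv> ginv H y"

lemma nb2: "norm (H y) \<le> 1/2" using nb B order_trans by blast

lemma N_bound: "\<bar>N y $ p $ q\<bar> \<le> 2"
  unfolding ginv_def using inv_I_plus(3)[OF nb2] .

lemma B_nonneg: "0 \<le> B" using nb[of 0] norm_ge_zero order_trans by blast

lemma N_minus_kd: "\<bar>N y $ a $ b - kd a b\<bar> \<le> 2 * real CARD('n) * B"
proof -
  have inv: "(mat 1 + H y) ** N y = mat 1" unfolding ginv_def using inv_I_plus(1)[OF nb2] .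
  have "N y + H y ** N y = mat 1"
    using inv by (simp add: mm_add_r)
  then have "N y $ a $ b - kd a b = - (H y ** N y) $ a $ b"
    by (auto simp: vec_eq_iff kd_def mat_def algebra_simps)
  then have "\<bar>N y $ a $ b - kd a b\<bar> = \<bar>\<Sum>p\<in>UNIV. H y $ a $ p * N y $ p $ b\<bar>"
    by (simp add: mm_entry)
  also have "\<dots> \<le> real CARD('n) * (B * 2)"
  proof (rule sum_bound)
    fix p
    have "\<bar>H y $ a $ p\<bar> \<le> B" using mat_entry_le nb order_trans by blast
    then show "\<bar>H y $ a $ p * N y $ p $ b\<bar> \<le> B * 2"
      unfolding abs_mult using N_bound B_nonneg by (intro mult_mono) auto
  qed
  finally show ?thesis by simp
qed

definition "dN a p q y = - (\<Sum>u\<in>UNIV. \<Sum>r\<in>UNIV. N y $ p $ r * Dh H a r u y * N y $ u $ q)"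

lemma N_ld: "ld a (\<lambda>y. N y $ p $ q) (dN a p q)"
  unfolding ld_def
proof
  fix y :: "real^'n"
  let ?Af = "\<lambda>s. H (y + s *\<^sub>R axis a 1)"
  let ?D = "\<chi> i j. Dh H a i j y"
  have "((\<lambda>s. minv (?Af s) $ p $ q) has_real_derivative
     - (\<Sum>u\<in>UNIV. \<Sum>r\<in>UNIV. minv (?Af 0) $ p $ r * ?D $ r $ u * minv (?Af 0) $ u $ q)) (at 0)"
  proof (rule inv_deriv)
    show "norm (?Af z) \<le> 1/2" for z by (rule nb2)
    fix i j
    show "((\<lambda>s. ?Af s $ i $ j) has_real_derivative ?D $ i $ j) (at 0)"
      using hd[of a i j] unfolding ld_def by simp
  qed
  then show "((\<lambda>s. N (y + s *\<^sub>R axis a 1) $ p $ q) has_real_derivative dN a p q y) (at 0)"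
    by (simp add: dN_def ginv_def)
qed

lemma N_cont: "continuous_on UNIV (\<lambda>y. N y $ p $ q)"
proof -
  have "isCont (\<lambda>y. N y $ p $ q) y0" for y0
  proof -
    have "((\<lambda>y. minv (H y) $ p $ q) \<longlongrightarrow> minv (H y0) $ p $ q) (at y0)"
    proof (rule inv_tendsto)
      show "norm (H z) \<le> 1/2" for z by (rule nb2)
      show "norm (H y0) \<le> 1/2" by (rule nb2)
      fix i j
      show "((\<lambda>z. H z $ i $ j) \<longlongrightarrow> H y0 $ i $ j) (at y0)"
        using ch[of i j] by (simp add: continuous_on_eq_continuous_at isCont_def)
    qed
    then show ?thesis unfolding isCont_def ginv_def .
  qed
  then show ?thesis by (simp add: continuous_at_imp_continuous_on)
qed

lemma dN_cont: "continuous_on UNIV (dN a p q)"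
  unfolding dN_def[abs_def] by (intro continuous_intros N_cont cdh)

lemma dN_Dh_le: "\<bar>dN a p q y * Dh H b i j y\<bar> \<le> real CARD('n) * (real CARD('n) * (4 * gsq H y))"
proof -
  have "dN a p q y * Dh H b i j y = - (\<Sum>u\<in>UNIV. \<Sum>r\<in>UNIV. N y $ p $ r * N y $ u $ q * (Dh H a r u y * Dh H b i j y))"
    unfolding dN_def by (simp add: sum_distrib_left sum_distrib_right mult_ac)
  also have "\<bar>\<dots>\<bar> \<le> real CARD('n) * (real CARD('n) * (4 * gsq H y))"
    unfolding abs_minus_cancel
  proof (intro sum_bound)
    fix u r
    have "\<bar>N y $ p $ r * N y $ u $ q\<bar> \<le> 2 * 2"
      unfolding abs_mult by (intro mult_mono N_bound) auto
    then show "\<bar>N y $ p $ r * N y $ u $ q * (Dh H a r u y * Dh H b i j y)\<bar> \<le> 4 * gsq H y"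
      unfolding abs_mult[of "N y $ p $ r * N y $ u $ q"] using DD_le[of H a r u y b i j]
      by (intro mult_mono) auto
  qed
  finally show ?thesis .
qed

end

context slice
begin

definition "P a i j y = (\<Sum>b\<in>UNIV. N y $ a $ b * Dh H b i j y)"
definition "dP a i j y = (\<Sum>b\<in>UNIV. dN a a b y * Dh H b i j y + N y $ a $ b * pd a (Dh H b i j) y)"

lemma P_ld: "ld a (P a i j) (dP a i j)"
proof -
  have "ld a (\<lambda>y. \<Sum>b\<in>UNIV. N y $ a $ b * Dh H b i j y)
           (\<lambda>y. \<Sum>b\<in>UNIV. dN a a b y * Dh H b i j y + N y $ a $ b * pd a (Dh H b i j) y)"
    by (intro ld_sum ld_mult N_ld hdd)
  then show ?thesis unfolding P_def[abs_def] dP_def[abs_def] .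
qed

lemma P_cont: "continuous_on UNIV (P a i j)"
  unfolding P_def[abs_def] by (intro continuous_intros N_cont cdh)

lemma dP_cont: "continuous_on UNIV (dP a i j)"
  unfolding dP_def[abs_def] by (intro continuous_intros N_cont cdh dN_cont cddh)

lemma P_split: "P a i j y = Dh H a i j y + (\<Sum>b\<in>UNIV. (N y $ a $ b - kd a b) * Dh H b i j y)"
proof -
  have "(\<Sum>b\<in>UNIV. kd a b * Dh H b i j y) = (\<Sum>b\<in>UNIV. if b = a then Dh H a i j y else 0)"
    by (rule sum.cong) (auto simp: kd_def)
  then have "(\<Sum>b\<in>UNIV. kd a b * Dh H b i j y) = Dh H a i j y" by simp
  then show ?thesis
    unfolding P_def by (simp add: left_diff_distrib sum_subtractf)
qed

lemma lap_divQ1: "lap H i j y + divQ1 H i j y = (\<Sum>a\<in>UNIV. dP a i j y)"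
proof -
  have q: "pd a (\<lambda>z. \<Sum>b\<in>UNIV. (ginv H z $ a $ b - kd a b) * Dh H b i j z) y
        = dP a i j y - pd a (Dh H a i j) y" for a
  proof -
    have "ld a (\<lambda>z. P a i j z - Dh H a i j z) (\<lambda>z. dP a i j z - pd a (Dh H a i j) z)"
      by (intro ld_diff P_ld hdd)
    then have "ld a (\<lambda>z. \<Sum>b\<in>UNIV. (ginv H z $ a $ b - kd a b) * Dh H b i j z)
        (\<lambda>z. dP a i j z - pd a (Dh H a i j) z)"
      by (rule ld_cong) (auto simp: P_split)
    then show ?thesis by (rule ld_pd)
  qed
  show ?thesis
    unfolding lap_def divQ1_def q by (simp add: sum_subtractf)
qed

lemma T_bound:
  "\<bar>Dh H i p a y * Dh H j q b y
        + 2 * Dh H a j p y * Dh H q i b y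
        - 2 * Dh H a j p y * Dh H b i q y
        - 2 * Dh H j p a y * Dh H b i q y
        - 2 * Dh H i p a y * Dh H b j q y\<bar> \<le> 9 * gsq H y"
  using DD_le[of H i p a y j q b] DD_le[of H a j p y q i b] DD_le[of H a j p y b i q]
    DD_le[of H j p a y b i q] DD_le[of H i p a y b j q]
  unfolding abs_le_iff by (simp add: mult.assoc)

lemma Q0_bound: "\<bar>Q0 H i j y\<bar> \<le> 22 * real CARD('n) ^ 4 * gsq H y"
proof -
  let ?n = "real CARD('n)"
  let ?g = "gsq H y"
  define S1 where "S1 = (\<Sum>a\<in>UNIV. \<Sum>b\<in>UNIV. \<Sum>p\<in>UNIV. \<Sum>q\<in>UNIV.
        ginv H y $ a $ b * ginv H y $ p $ q *
        ( Dh H i p a y * Dh H j q b y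
        + 2 * Dh H a j p y * Dh H q i b y
        - 2 * Dh H a j p y * Dh H b i q y
        - 2 * Dh H j p a y * Dh H b i q y
        - 2 * Dh H i p a y * Dh H b j q y))"
  define S2 where "S2 = (\<Sum>a\<in>UNIV. \<Sum>b\<in>UNIV. pd a (\<lambda>z. ginv H z $ a $ b) y * Dh H b i j y)"
  have Q: "Q0 H i j y = 1/2 * S1 - S2" unfolding Q0_def S1_def S2_def by simp
  have "\<bar>S1\<bar> \<le> ?n * (?n * (?n * (?n * (4 * (9 * ?g)))))"
    unfolding S1_def
  proof (intro sum_bound)
    fix a b p q
    have "\<bar>ginv H y $ a $ b * ginv H y $ p $ q\<bar> \<le> 2 * 2"
      unfolding abs_mult by (intro mult_mono N_bound) auto
    then show "\<bar>ginv H y $ a $ b * ginv H y $ p $ q *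
        ( Dh H i p a y * Dh H j q b y
        + 2 * Dh H a j p y * Dh H q i b y
        - 2 * Dh H a j p y * Dh H b i q y
        - 2 * Dh H j p a y * Dh H b i q y
        - 2 * Dh H i p a y * Dh H b j q y)\<bar> \<le> 4 * (9 * ?g)"
      unfolding abs_mult[of "ginv H y $ a $ b * ginv H y $ p $ q"]
      using T_bound[where i=i and p=p and a=a and j=j and q=q and b=b and y=y] by (intro mult_mono) auto
  qed
  moreover have "\<bar>S2\<bar> \<le> ?n * (?n * (?n * (?n * (4 * ?g))))"
    unfolding S2_def
  proof (intro sum_bound)
    fix a b
    show "\<bar>pd a (\<lambda>z. ginv H z $ a $ b) y * Dh H b i j y\<bar> \<le> ?n * (?n * (4 * ?g))"
      using dN_Dh_le[of a a b y b i j] ld_pd[OF N_ld[of a a b]] by simp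
  qed
  ultimately show ?thesis unfolding Q by (simp add: power4_eq_xxxx)
qed

end

lemma amgm: "\<bar>u * v\<bar> \<le> u\<^sup>2 / 2 + v\<^sup>2 / 2" for u v :: real
proof -
  have "0 \<le> (\<bar>u\<bar> - \<bar>v\<bar>)\<^sup>2" by simp
  then show ?thesis by (simp add: power2_eq_square abs_mult algebra_simps)
qed

locale en = cut c \<eta> + slice H B
  for c :: real and \<eta> :: "real^'n::finite \<Rightarrow> real" and H :: "real^'n \<Rightarrow> real^'n^'n" and B :: real +
  fixes R M \<epsilon> :: real
  assumes R: "R > 0" and M: "\<And>a z. \<bar>pd a \<phi> z\<bar> \<le> M" and M0: "M \<ge> 0" and Be: "B \<le> \<epsilon>"
begin

definition ind :: "real^'n \<Rightarrow> real" where "ind y = (if y \<in> ball 0 (2*R) - ball 0 R then 1 else (0::real))"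
definition "K1 = 2 * real CARD('n) * B"

lemma ind_01: "0 \<le> ind y" "ind y \<le> 1" "ind y * ind y = ind y"
  unfolding ind_def by auto

lemma K1_nonneg: "0 \<le> K1" unfolding K1_def using B_nonneg by simp
lemma K1_le: "K1 \<le> real CARD('n)" unfolding K1_def using B by simp

lemma dE_b: "\<bar>dE R a y\<bar> \<le> 2 * M / R * sqrt (E R y) * ind y"
  unfolding ind_def by (rule dE_bound[OF R M])

lemma dE_h_D: "\<bar>dE R a y * x * D\<bar> \<le> E R y * D\<^sup>2 / 2 + 2 * M\<^sup>2 / R\<^sup>2 * ind y * x\<^sup>2"
proof -
  let ?s = "sqrt (E R y)"
  have s2: "?s\<^sup>2 = E R y" using E_range by simp
  have "\<bar>dE R a y * x * D\<bar> = \<bar>dE R a y\<bar> * \<bar>x\<bar> * \<bar>D\<bar>" by (simp add: abs_mult)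
  also have "\<dots> \<le> (2 * M / R * ?s * ind y) * \<bar>x\<bar> * \<bar>D\<bar>"
    using dE_b by (intro mult_right_mono) auto
  also have "\<dots> = \<bar>(?s * D) * (2 * M / R * ind y * x)\<bar>"
    using R M0 ind_01 E_range[of R y] by (simp add: abs_mult)
  also have "\<dots> \<le> (?s * D)\<^sup>2 / 2 + (2 * M / R * ind y * x)\<^sup>2 / 2" by (rule amgm)
  also have "\<dots> = E R y * D\<^sup>2 / 2 + 2 * M\<^sup>2 / R\<^sup>2 * (ind y * ind y) * x\<^sup>2"
    using s2 by (simp add: power_mult_distrib power2_eq_square field_simps)
  finally show ?thesis using ind_01 by simp
qed

definition "Q1 a i j y = (\<Sum>b\<in>UNIV. (N y $ a $ b - kd a b) * Dh H b i j y)"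

lemma D_Q1: "\<bar>Dh H a i j y * Q1 a i j y\<bar> \<le> real CARD('n) * (K1 * gsq H y)"
  unfolding Q1_def sum_distrib_left
proof (rule sum_bound)
  fix b
  have "\<bar>Dh H a i j y * ((N y $ a $ b - kd a b) * Dh H b i j y)\<bar> =
    \<bar>N y $ a $ b - kd a b\<bar> * \<bar>Dh H a i j y * Dh H b i j y\<bar>" by (simp add: abs_mult)
  also have "\<dots> \<le> K1 * gsq H y"
    unfolding K1_def using N_minus_kd DD_le B_nonneg by (intro mult_mono) (auto simp: mult.assoc)
  finally show "\<bar>Dh H a i j y * ((N y $ a $ b - kd a b) * Dh H b i j y)\<bar> \<le> K1 * gsq H y" .
qed

lemma dE_h_Q1: "\<bar>dE R a y * x * Q1 a i j y\<bar> \<le> real CARD('n) * (K1 * (E R y * gsq H y / 2 + 2 * M\<^sup>2 / R\<^sup>2 * ind y * x\<^sup>2))"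
  unfolding Q1_def sum_distrib_left
proof (rule sum_bound)
  fix b
  have "\<bar>dE R a y * x * ((N y $ a $ b - kd a b) * Dh H b i j y)\<bar> =
    \<bar>N y $ a $ b - kd a b\<bar> * \<bar>dE R a y * x * Dh H b i j y\<bar>" by (simp add: abs_mult)
  also have "\<dots> \<le> K1 * (E R y * (Dh H b i j y)\<^sup>2 / 2 + 2 * M\<^sup>2 / R\<^sup>2 * ind y * x\<^sup>2)"
    unfolding K1_def using N_minus_kd dE_h_D B_nonneg by (intro mult_mono) (auto simp: mult.assoc)
  also have "\<dots> \<le> K1 * (E R y * gsq H y / 2 + 2 * M\<^sup>2 / R\<^sup>2 * ind y * x\<^sup>2)"
    using K1_nonneg E_range Dh_sq_le by (intro mult_left_mono) (auto intro!: mult_left_mono divide_right_mono)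
  finally show "\<bar>dE R a y * x * ((N y $ a $ b - kd a b) * Dh H b i j y)\<bar>
     \<le> K1 * (E R y * gsq H y / 2 + 2 * M\<^sup>2 / R\<^sup>2 * ind y * x\<^sup>2)" .
qed

definition "cI = 2 * M\<^sup>2 + 2 * (real CARD('n))\<^sup>2 * M\<^sup>2"

lemma term_bound:
  "- ((dE R a y * H y $ i $ j + E R y * Dh H a i j y) * P a i j y)
    \<le> - (E R y * (Dh H a i j y)\<^sup>2 / 2) + 3/2 * real CARD('n) * K1 * (E R y * gsq H y)
      + cI / R\<^sup>2 * ind y * (H y $ i $ j)\<^sup>2"
proof -
  let ?x = "H y $ i $ j" and ?D = "Dh H a i j y" and ?Q = "Q1 a i j y" and ?E = "E R y"
  have P: "P a i j y = ?D + ?Q" unfolding P_split Q1_def ..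
  have e: "- ((dE R a y * ?x + ?E * ?D) * P a i j y)
      = - (?E * ?D\<^sup>2) - ?E * (?D * ?Q) - dE R a y * ?x * ?D - dE R a y * ?x * ?Q"
    unfolding P by (simp add: algebra_simps power2_eq_square)
  have b1: "- (?E * (?D * ?Q)) \<le> ?E * (real CARD('n) * (K1 * gsq H y))"
    using D_Q1[of a i j y] E_range[of R y]
    by (smt (verit) abs_le_iff mult_left_mono mult_minus_right)
  have b2: "- (dE R a y * ?x * ?D) \<le> ?E * ?D\<^sup>2 / 2 + 2 * M\<^sup>2 / R\<^sup>2 * ind y * ?x\<^sup>2"
    using dE_h_D[of a y ?x ?D] by linarith
  have b3: "- (dE R a y * ?x * ?Q) \<le> real CARD('n) * (K1 * (?E * gsq H y / 2 + 2 * M\<^sup>2 / R\<^sup>2 * ind y * ?x\<^sup>2))"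
    using dE_h_Q1[of a y ?x i j] by linarith
  have b4: "real CARD('n) * (K1 * (2 * M\<^sup>2 / R\<^sup>2 * ind y * ?x\<^sup>2)) \<le> real CARD('n) * (real CARD('n) * (2 * M\<^sup>2 / R\<^sup>2 * ind y * ?x\<^sup>2))"
    using K1_le ind_01 R by (intro mult_left_mono mult_right_mono) auto
  have "cI / R\<^sup>2 * ind y * ?x\<^sup>2 = 2 * M\<^sup>2 / R\<^sup>2 * ind y * ?x\<^sup>2 + real CARD('n) * (real CARD('n) * (2 * M\<^sup>2 / R\<^sup>2 * ind y * ?x\<^sup>2))"
    using R unfolding cI_def by (simp add: field_simps power2_eq_square)
  then show ?thesis unfolding e using b1 b2 b3 b4
    by (simp add: algebra_simps add_divide_distrib)
qed

end

context en
begin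

definition "Cc = 3 * real CARD('n) ^ 5 + 22 * real CARD('n) ^ 6 + real CARD('n) * cI + 1"

lemma cI_nonneg: "0 \<le> cI" unfolding cI_def by simp

lemma Cc_pos: "Cc > 0" unfolding Cc_def using cI_nonneg by (simp add: add_nonneg_pos)

definition "Gf y = (\<Sum>a\<in>UNIV. \<Sum>i\<in>UNIV. \<Sum>j\<in>UNIV. - ((dE R a y * H y $ i $ j + E R y * Dh H a i j y) * P a i j y))
   + E R y * (\<Sum>i\<in>UNIV. \<Sum>j\<in>UNIV. H y $ i $ j * Q0 H i j y)"

lemma sum3_eval:
  "(\<Sum>a\<in>UNIV. \<Sum>i\<in>UNIV. \<Sum>j\<in>UNIV. - (E R y * (Dh H a i j y)\<^sup>2 / 2) + X + Y * (H y $ i $ j)\<^sup>2)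
    = - (E R y * gsq H y) / 2 + real CARD('n) ^ 3 * X + real CARD('n) * Y * (norm (H y))\<^sup>2"
proof -
  have "(\<Sum>a\<in>UNIV. \<Sum>i\<in>UNIV. \<Sum>j\<in>UNIV. - (E R y * (Dh H a i j y)\<^sup>2 / 2) + X + Y * (H y $ i $ j)\<^sup>2)
     = (\<Sum>a\<in>UNIV. \<Sum>i\<in>UNIV. \<Sum>j\<in>UNIV. - (E R y * (Dh H a i j y)\<^sup>2 / 2))
       + (\<Sum>a\<in>(UNIV::'n set). \<Sum>i\<in>(UNIV::'n set). \<Sum>j\<in>(UNIV::'n set). X)
       + (\<Sum>a\<in>(UNIV::'n set). \<Sum>i\<in>UNIV. \<Sum>j\<in>UNIV. Y * (H y $ i $ j)\<^sup>2)"
    by (simp only: sum.distrib)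
  also have "(\<Sum>a\<in>UNIV. \<Sum>i\<in>UNIV. \<Sum>j\<in>UNIV. - (E R y * (Dh H a i j y)\<^sup>2 / 2)) = - (E R y * gsq H y) / 2"
    unfolding gsq_def by (simp add: sum_negf sum_distrib_left sum_divide_distrib)
  also have "(\<Sum>a\<in>(UNIV::'n set). \<Sum>i\<in>(UNIV::'n set). \<Sum>j\<in>(UNIV::'n set). X) = real CARD('n) ^ 3 * X"
    by (simp add: power3_eq_cube)
  also have "(\<Sum>a\<in>(UNIV::'n set). \<Sum>i\<in>UNIV. \<Sum>j\<in>UNIV. Y * (H y $ i $ j)\<^sup>2) = real CARD('n) * Y * (norm (H y))\<^sup>2"
    by (simp add: norm_sq_mat sum_distrib_left mult.assoc)
  finally show ?thesis .
qed

lemma Q0_part: "E R y * (\<Sum>i\<in>UNIV. \<Sum>j\<in>UNIV. H y $ i $ j * Q0 H i j y)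
   \<le> 22 * real CARD('n) ^ 6 * B * (E R y * gsq H y)"
proof -
  have "\<bar>\<Sum>i\<in>UNIV. \<Sum>j\<in>UNIV. H y $ i $ j * Q0 H i j y\<bar>
     \<le> real CARD('n) * (real CARD('n) * (B * (22 * real CARD('n) ^ 4 * gsq H y)))"
  proof (intro sum_bound)
    fix i j
    have "\<bar>H y $ i $ j\<bar> \<le> B" using mat_entry_le nb order_trans by blast
    then show "\<bar>H y $ i $ j * Q0 H i j y\<bar> \<le> B * (22 * real CARD('n) ^ 4 * gsq H y)"
      unfolding abs_mult using Q0_bound by (intro mult_mono) auto
  qed
  then have "E R y * (\<Sum>i\<in>UNIV. \<Sum>j\<in>UNIV. H y $ i $ j * Q0 H i j y)
     \<le> E R y * (real CARD('n) * (real CARD('n) * (B * (22 * real CARD('n) ^ 4 * gsq H y))))"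
    using E_range[of R y] by (intro mult_left_mono) auto
  then show ?thesis by (simp add: power_def algebra_simps)
qed

lemma Gf_bound: "Gf y \<le> (- 1/2 + Cc * \<epsilon>) * (E R y * gsq H y) + Cc / R\<^sup>2 * (ind y * (norm (H y))\<^sup>2)"
proof -
  let ?Eg = "E R y * gsq H y"
  have Eg: "0 \<le> ?Eg" using mult_nonneg_nonneg[OF E_range(1) gsq_nonneg] .
  have "(\<Sum>a\<in>UNIV. \<Sum>i\<in>UNIV. \<Sum>j\<in>UNIV. - ((dE R a y * H y $ i $ j + E R y * Dh H a i j y) * P a i j y))
    \<le> (\<Sum>a\<in>UNIV. \<Sum>i\<in>UNIV. \<Sum>j\<in>UNIV. - (E R y * (Dh H a i j y)\<^sup>2 / 2) + 3/2 * real CARD('n) * K1 * ?Eg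
      + cI / R\<^sup>2 * ind y * (H y $ i $ j)\<^sup>2)"
    by (intro sum_mono term_bound)
  also have "\<dots> = - ?Eg / 2 + real CARD('n) ^ 3 * (3/2 * real CARD('n) * K1 * ?Eg)
      + real CARD('n) * (cI / R\<^sup>2 * ind y) * (norm (H y))\<^sup>2"
    by (rule sum3_eval)
  finally have S: "(\<Sum>a\<in>UNIV. \<Sum>i\<in>UNIV. \<Sum>j\<in>UNIV. - ((dE R a y * H y $ i $ j + E R y * Dh H a i j y) * P a i j y))
    \<le> - ?Eg / 2 + 3 * real CARD('n) ^ 5 * B * ?Eg + real CARD('n) * cI / R\<^sup>2 * (ind y * (norm (H y))\<^sup>2)"
    unfolding K1_def by (simp add: power_def algebra_simps)
  have c1: "(3 * real CARD('n) ^ 5 + 22 * real CARD('n) ^ 6) * B * ?Eg \<le> Cc * \<epsilon> * ?Eg"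
    using Be B_nonneg Eg cI_nonneg unfolding Cc_def
    by (intro mult_right_mono mult_mono) auto
  have c2: "real CARD('n) * cI / R\<^sup>2 * (ind y * (norm (H y))\<^sup>2) \<le> Cc / R\<^sup>2 * (ind y * (norm (H y))\<^sup>2)"
    using ind_01 R cI_nonneg unfolding Cc_def
    by (intro mult_right_mono divide_right_mono) auto
  show ?thesis unfolding Gf_def using S Q0_part[of y] c1 c2 by (simp add: algebra_simps)
qed

end

lemma integrable_on_sub:
  fixes f :: "real^'n::finite \<Rightarrow> real"
  assumes "continuous_on UNIV f" "A \<subseteq> bx k" "A \<in> sets lebesgue"
  shows "f integrable_on A"
proof -
  have "f absolutely_integrable_on bx k" unfolding bx_def
    by (rule absolutely_integrable_continuous) (use assms continuous_on_subset in blast)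
  then have "f absolutely_integrable_on A"
    using set_integrable_subset assms by blast
  then show ?thesis using absolutely_integrable_on_def by blast
qed

lemma cont_integrable_bx: "continuous_on UNIV (f::real^'n::finite \<Rightarrow> real) \<Longrightarrow> f integrable_on bx k"
  unfolding bx_def using integrable_continuous continuous_on_subset by blast

context en
begin

definition "Fl a i j y = E R y * H y $ i $ j * P a i j y"
definition "dFl a i j y = dE R a y * H y $ i $ j * P a i j y + E R y * Dh H a i j y * P a i j y
    + E R y * H y $ i $ j * dP a i j y"

lemma Fl_ld: "ld a (Fl a i j) (dFl a i j)"
proof -
  have "ld a (\<lambda>y. E R y * H y $ i $ j * P a i j y)
    (\<lambda>y. (dE R a y * H y $ i $ j + E R y * Dh H a i j y) * P a i j y + E R y * H y $ i $ j * dP a i j y)"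
    by (intro ld_mult E_ld[OF R] hd P_ld)
  then show ?thesis unfolding Fl_def[abs_def] dFl_def[abs_def]
    by (rule ld_cong) (auto simp: algebra_simps)
qed

lemma Fl_cont: "continuous_on UNIV (Fl a i j)"
  unfolding Fl_def[abs_def] by (intro continuous_intros E_cont ch P_cont)

lemma dFl_cont: "continuous_on UNIV (dFl a i j)"
  unfolding dFl_def[abs_def] by (intro continuous_intros E_cont ch P_cont dE_cont cdh dP_cont)

lemma Fl_zero: "2 * R \<le> norm y \<Longrightarrow> Fl a i j y = 0"
  unfolding Fl_def using E_zero[OF R] by simp

lemma dFl_int: "integral (bx (2*R+1)) (dFl a i j) = 0"
  by (rule ibp[OF Fl_ld Fl_cont dFl_cont Fl_zero]) auto

lemma Q0_eq: "Q0 H i j y = 1/2 * (\<Sum>a\<in>UNIV. \<Sum>b\<in>UNIV. \<Sum>p\<in>UNIV. \<Sum>q\<in>UNIV.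
        N y $ a $ b * N y $ p $ q *
        ( Dh H i p a y * Dh H j q b y
        + 2 * Dh H a j p y * Dh H q i b y
        - 2 * Dh H a j p y * Dh H b i q y
        - 2 * Dh H j p a y * Dh H b i q y
        - 2 * Dh H i p a y * Dh H b j q y))
     - (\<Sum>a\<in>UNIV. \<Sum>b\<in>UNIV. dN a a b y * Dh H b i j y)"
  unfolding Q0_def using ld_pd_fun[OF N_ld] by simp

lemma Q0_cont: "continuous_on UNIV (Q0 H i j)"
proof -
  have "continuous_on UNIV (\<lambda>y. 1/2 * (\<Sum>a\<in>UNIV. \<Sum>b\<in>UNIV. \<Sum>p\<in>UNIV. \<Sum>q\<in>UNIV.
        N y $ a $ b * N y $ p $ q *
        ( Dh H i p a y * Dh H j q b y
        + 2 * Dh H a j p y * Dh H q i b y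
        - 2 * Dh H a j p y * Dh H b i q y
        - 2 * Dh H j p a y * Dh H b i q y
        - 2 * Dh H i p a y * Dh H b j q y))
     - (\<Sum>a\<in>UNIV. \<Sum>b\<in>UNIV. dN a a b y * Dh H b i j y))"
    by (intro continuous_intros N_cont cdh dN_cont)
  then show ?thesis unfolding Q0_eq[abs_def] .
qed

lemma Gf_cont: "continuous_on UNIV Gf"
  unfolding Gf_def[abs_def] by (intro continuous_intros E_cont ch P_cont dE_cont cdh Q0_cont)

lemma ident:
  "E R y * (\<Sum>i\<in>UNIV. \<Sum>j\<in>UNIV. H y $ i $ j * (lap H i j y + Q0 H i j y + divQ1 H i j y))
   = (\<Sum>a\<in>UNIV. \<Sum>i\<in>UNIV. \<Sum>j\<in>UNIV. dFl a i j y) + Gf y"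
proof -
  have pw: "dFl a i j y + - ((dE R a y * H y $ i $ j + E R y * Dh H a i j y) * P a i j y)
      = E R y * H y $ i $ j * dP a i j y" for a i j
    unfolding dFl_def by (simp add: algebra_simps)
  have "(\<Sum>a\<in>UNIV. \<Sum>i\<in>UNIV. \<Sum>j\<in>UNIV. dFl a i j y)
      + (\<Sum>a\<in>UNIV. \<Sum>i\<in>UNIV. \<Sum>j\<in>UNIV. - ((dE R a y * H y $ i $ j + E R y * Dh H a i j y) * P a i j y))
      = (\<Sum>a\<in>UNIV. \<Sum>i\<in>UNIV. \<Sum>j\<in>UNIV. E R y * H y $ i $ j * dP a i j y)"
    by (simp only: sum.distrib[symmetric] pw)
  also have "\<dots> = (\<Sum>i\<in>UNIV. \<Sum>a\<in>UNIV. \<Sum>j\<in>UNIV. E R y * H y $ i $ j * dP a i j y)"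
    by (rule sum.swap)
  also have "\<dots> = (\<Sum>i\<in>UNIV. \<Sum>j\<in>UNIV. \<Sum>a\<in>UNIV. E R y * H y $ i $ j * dP a i j y)"
    by (rule sum.cong[OF refl], rule sum.swap)
  also have "\<dots> = E R y * (\<Sum>i\<in>UNIV. \<Sum>j\<in>UNIV. H y $ i $ j * (lap H i j y + divQ1 H i j y))"
    by (simp add: lap_divQ1 sum_distrib_left mult.assoc)
  finally have A: "(\<Sum>a\<in>UNIV. \<Sum>i\<in>UNIV. \<Sum>j\<in>UNIV. dFl a i j y)
      + (\<Sum>a\<in>UNIV. \<Sum>i\<in>UNIV. \<Sum>j\<in>UNIV. - ((dE R a y * H y $ i $ j + E R y * Dh H a i j y) * P a i j y))
      = E R y * (\<Sum>i\<in>UNIV. \<Sum>j\<in>UNIV. H y $ i $ j * (lap H i j y + divQ1 H i j y))" .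
  have B: "E R y * (\<Sum>i\<in>UNIV. \<Sum>j\<in>UNIV. H y $ i $ j * (lap H i j y + Q0 H i j y + divQ1 H i j y))
     = E R y * (\<Sum>i\<in>UNIV. \<Sum>j\<in>UNIV. H y $ i $ j * (lap H i j y + divQ1 H i j y))
       + E R y * (\<Sum>i\<in>UNIV. \<Sum>j\<in>UNIV. H y $ i $ j * Q0 H i j y)"
    by (simp add: algebra_simps sum.distrib)
  show ?thesis unfolding B Gf_def A[symmetric] by simp
qed

end

context en
begin

lemma gsq_cont: "continuous_on UNIV (gsq H)"
  unfolding gsq_def[abs_def] by (intro continuous_intros cdh)

lemma nH_cont: "continuous_on UNIV (\<lambda>y. (norm (H y))\<^sup>2)"
  unfolding norm_sq_mat by (intro continuous_intros ch)

lemma out_bx: "y \<notin> bx (2*R+1) \<Longrightarrow> 2 * R \<le> norm y"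
proof -
  assume "y \<notin> bx (2*R+1)"
  then have "\<not> norm y \<le> 2*R+1" using in_bx by blast
  then show ?thesis by linarith
qed

lemma A_sub: "ball (0::real^'n) (2*R) - ball 0 R \<subseteq> bx (2*R+1)"
proof
  fix x :: "real^'n" assume "x \<in> ball 0 (2*R) - ball 0 R"
  then have "norm x \<le> 2*R+1" by simp
  then show "x \<in> bx (2*R+1)" by (rule in_bx)
qed

lemma slice_main:
  "integral (bx (2*R+1)) (\<lambda>y. E R y * (\<Sum>i\<in>UNIV. \<Sum>j\<in>UNIV. H y $ i $ j * (lap H i j y + Q0 H i j y + divQ1 H i j y)))
   \<le> (- 1/2 + Cc * \<epsilon>) * integral UNIV (\<lambda>y. E R y * gsq H y)
     + Cc / R\<^sup>2 * integral (ball 0 (2*R) - ball 0 R) (\<lambda>y. (norm (H y))\<^sup>2)"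
proof -
  let ?K = "bx (2*R+1) :: (real^'n) set"
  let ?A = "ball 0 (2*R) - ball (0::real^'n) R"
  have dF: "((\<lambda>y. \<Sum>a\<in>UNIV. \<Sum>i\<in>UNIV. \<Sum>j\<in>UNIV. dFl a i j y) has_integral 0) ?K"
  proof -
    have "((\<lambda>y. \<Sum>a\<in>UNIV. \<Sum>i\<in>UNIV. \<Sum>j\<in>UNIV. dFl a i j y) has_integral
        (\<Sum>a\<in>(UNIV::'n set). \<Sum>i\<in>(UNIV::'n set). \<Sum>j\<in>(UNIV::'n set). 0)) ?K"
    proof (intro has_integral_sum)
      fix a i j
      have "dFl a i j integrable_on ?K" by (rule cont_integrable_bx[OF dFl_cont])
      then show "(dFl a i j has_integral 0) ?K" using dFl_int
        by (metis has_integral_integral)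
    qed auto
    then show ?thesis by simp
  qed
  have Gi: "Gf integrable_on ?K" by (rule cont_integrable_bx[OF Gf_cont])
  have L: "integral ?K (\<lambda>y. E R y * (\<Sum>i\<in>UNIV. \<Sum>j\<in>UNIV. H y $ i $ j * (lap H i j y + Q0 H i j y + divQ1 H i j y)))
     = integral ?K Gf"
  proof -
    have "((\<lambda>y. (\<Sum>a\<in>UNIV. \<Sum>i\<in>UNIV. \<Sum>j\<in>UNIV. dFl a i j y) + Gf y) has_integral (0 + integral ?K Gf)) ?K"
      by (intro has_integral_add dF integrable_integral Gi)
    then show ?thesis unfolding ident[symmetric] by (simp add: integral_unique)
  qed
  have Egi: "(\<lambda>y. E R y * gsq H y) integrable_on ?K"
    by (intro cont_integrable_bx continuous_intros E_cont gsq_cont)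
  have Egz: "integral ?K (\<lambda>y. E R y * gsq H y) = integral UNIV (\<lambda>y. E R y * gsq H y)"
  proof (rule supp_integral)
    fix x assume "x \<notin> ?K"
    then have "E R x = 0" using out_bx E_zero[OF R] by blast
    then show "E R x * gsq H x = 0" by simp
  qed
  have indeq: "(\<lambda>y. ind y * (norm (H y))\<^sup>2) = (\<lambda>y. if y \<in> ?A then (norm (H y))\<^sup>2 else 0)"
    unfolding ind_def by auto
  have hA: "(\<lambda>y. (norm (H y))\<^sup>2) integrable_on ?A"
    by (rule integrable_on_sub[OF nH_cont A_sub]) auto
  have indz: "\<And>y. y \<notin> ?K \<Longrightarrow> ind y * (norm (H y))\<^sup>2 = 0"
    using A_sub unfolding ind_def by auto
  have "(\<lambda>y. ind y * (norm (H y))\<^sup>2) integrable_on UNIV"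
    unfolding indeq integrable_restrict_UNIV by (rule hA)
  then have Ii: "(\<lambda>y. ind y * (norm (H y))\<^sup>2) integrable_on ?K"
  proof -
    have "((\<lambda>y. ind y * (norm (H y))\<^sup>2) integrable_on ?K) = ((\<lambda>y. ind y * (norm (H y))\<^sup>2) integrable_on UNIV)"
      by (rule supp_integrable) (rule indz)
    then show ?thesis using \<open>(\<lambda>y. ind y * (norm (H y))\<^sup>2) integrable_on UNIV\<close> by blast
  qed
  have "integral ?K (\<lambda>y. ind y * (norm (H y))\<^sup>2) = integral UNIV (\<lambda>y. ind y * (norm (H y))\<^sup>2)"
    by (rule supp_integral) (rule indz)
  also have "\<dots> = integral ?A (\<lambda>y. (norm (H y))\<^sup>2)"
    unfolding indeq integral_restrict_UNIV ..
  finally have Iz: "integral ?K (\<lambda>y. ind y * (norm (H y))\<^sup>2) = integral ?A (\<lambda>y. (norm (H y))\<^sup>2)" .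
  have "integral ?K Gf \<le> integral ?K (\<lambda>y. (- 1/2 + Cc * \<epsilon>) * (E R y * gsq H y) + Cc / R\<^sup>2 * (ind y * (norm (H y))\<^sup>2))"
  proof (rule integral_le[OF Gi])
    show "(\<lambda>y. (- 1/2 + Cc * \<epsilon>) * (E R y * gsq H y) + Cc / R\<^sup>2 * (ind y * (norm (H y))\<^sup>2)) integrable_on ?K"
      by (intro integrable_add integrable_on_mult_right Egi Ii)
  qed (rule Gf_bound)
  also have "\<dots> = (- 1/2 + Cc * \<epsilon>) * integral ?K (\<lambda>y. E R y * gsq H y) + Cc / R\<^sup>2 * integral ?K (\<lambda>y. ind y * (norm (H y))\<^sup>2)"
    by (subst integral_add[OF integrable_on_mult_right[OF Egi] integrable_on_mult_right[OF Ii]])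
       (simp add: integral_mult_right)
  finally show ?thesis unfolding L Egz Iz .
qed

end

lemma slice_cont:
  fixes f :: "real^'n::finite \<Rightarrow> real \<Rightarrow> real"
  assumes "continuous_on (UNIV \<times> {0..}) (\<lambda>(x,t). f x t)" "0 \<le> t"
  shows "continuous_on UNIV (\<lambda>x. f x t)"
proof -
  have "continuous_on UNIV (\<lambda>x. (\<lambda>(x,t). f x t) (x, t))"
    by (rule continuous_on_compose2[OF assms(1)]) (use assms(2) in \<open>auto intro!: continuous_intros\<close>)
  then show ?thesis by simp
qed

lemma swap_cont:
  fixes f :: "real^'n::finite \<Rightarrow> real \<Rightarrow> real"
  assumes "continuous_on (UNIV \<times> {0..}) (\<lambda>(x,t). f x t)" "U \<subseteq> {0..}"
  shows "continuous_on (U \<times> S) (\<lambda>p. f (snd p) (fst p))"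
proof -
  have "continuous_on (U \<times> S) (\<lambda>p. (\<lambda>(x,t). f x t) (snd p, fst p))"
    by (rule continuous_on_compose2[OF assms(1)]) (use assms(2) in \<open>auto intro!: continuous_intros\<close>)
  then show ?thesis by simp
qed

lemma time_deriv:
  fixes h :: "real^'n::finite \<Rightarrow> real \<Rightarrow> real^'n^'n" and Ef :: "real^'n \<Rightarrow> real"
    and htf :: "'n \<Rightarrow> 'n \<Rightarrow> real^'n \<Rightarrow> real \<Rightarrow> real"
  assumes Ec: "continuous_on UNIV Ef" and Ez: "\<And>x. x \<notin> bx k \<Longrightarrow> Ef x = 0"
    and hc: "\<And>i j. continuous_on (UNIV \<times> {0..}) (\<lambda>(x,t). h x t $ i $ j)"
    and htc: "\<And>i j. continuous_on (UNIV \<times> {0..}) (\<lambda>(x,t). htf i j x t)"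
    and hd: "\<And>i j x s. 0 \<le> s \<Longrightarrow> ((\<lambda>s. h x s $ i $ j) has_real_derivative htf i j x s) (at s within {0..})"
    and t: "0 < t"
  shows "((\<lambda>s. integral UNIV (\<lambda>x. Ef x * (norm (h x s))\<^sup>2)) has_real_derivative
     integral (bx k) (\<lambda>x. Ef x * (\<Sum>i\<in>UNIV. \<Sum>j\<in>UNIV. 2 * (h x t $ i $ j * htf i j x t)))) (at t)"
proof -
  let ?U = "ball t (t/2)"
  have U0: "?U \<subseteq> {0..}"
  proof
    fix x assume "x \<in> ?U"
    then have "\<bar>t - x\<bar> < t / 2" by (simp add: dist_real_def)
    moreover have "t - x \<le> \<bar>t - x\<bar>" by (rule abs_ge_self)
    ultimately show "x \<in> {0..}" using t by simp
  qed
  have feq: "integral UNIV (\<lambda>x. Ef x * (norm (h x s))\<^sup>2)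
      = integral (bx k) (\<lambda>x. Ef x * (\<Sum>i\<in>UNIV. \<Sum>j\<in>UNIV. (h x s $ i $ j)\<^sup>2))" for s
    unfolding norm_sq_mat by (rule supp_integral[symmetric]) (simp add: Ez)
  have "((\<lambda>s. integral (bx k) (\<lambda>x. Ef x * (\<Sum>i\<in>UNIV. \<Sum>j\<in>UNIV. (h x s $ i $ j)\<^sup>2))) has_field_derivative
     integral (bx k) (\<lambda>x. Ef x * (\<Sum>i\<in>UNIV. \<Sum>j\<in>UNIV. 2 * (h x t $ i $ j * htf i j x t)))) (at t within ?U)"
    unfolding bx_def
  proof (rule leibniz_rule_field_derivative)
    fix s x assume s: "s \<in> ?U"
    then have "\<bar>t - s\<bar> < t / 2" by (simp add: dist_real_def)
    moreover have "t - s \<le> \<bar>t - s\<bar>" by (rule abs_ge_self)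
    ultimately have s0: "0 < s" using t by simp
    have d: "((\<lambda>s. h x s $ i $ j) has_real_derivative htf i j x s) (at s)" for i j
    proof -
      have "at s within {0..} = at s" using s0 by (intro at_within_interior) auto
      then show ?thesis using hd[where s=s and i=i and j=j and x=x] s0 by simp
    qed
    have "((\<lambda>s. Ef x * (\<Sum>i\<in>UNIV. \<Sum>j\<in>UNIV. (h x s $ i $ j)\<^sup>2)) has_real_derivative
       Ef x * (\<Sum>i\<in>UNIV. \<Sum>j\<in>UNIV. 2 * (h x s $ i $ j * htf i j x s))) (at s)"
      by (intro DERIV_cmult DERIV_sum) (auto intro!: derivative_eq_intros d)
    then show "((\<lambda>s. Ef x * (\<Sum>i\<in>UNIV. \<Sum>j\<in>UNIV. (h x s $ i $ j)\<^sup>2)) has_real_derivative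
       Ef x * (\<Sum>i\<in>UNIV. \<Sum>j\<in>UNIV. 2 * (h x s $ i $ j * htf i j x s))) (at s within ?U)"
      by (rule has_field_derivative_at_within)
  next
    fix s assume s: "s \<in> ?U"
    then have "0 \<le> s" using U0 by auto
    then have "continuous_on UNIV (\<lambda>x. Ef x * (\<Sum>i\<in>UNIV. \<Sum>j\<in>UNIV. (h x s $ i $ j)\<^sup>2))"
      by (intro continuous_intros Ec slice_cont[OF hc])
    then show "(\<lambda>x. Ef x * (\<Sum>i\<in>UNIV. \<Sum>j\<in>UNIV. (h x s $ i $ j)\<^sup>2)) integrable_on cbox (\<chi> i. - k) (\<chi> i. k)"
      using integrable_continuous continuous_on_subset by blast
  next
    have c1: "continuous_on (?U \<times> cbox (\<chi> i. - k) (\<chi> i. k)) (\<lambda>p. h (snd p) (fst p) $ i $ j)" for i j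
      by (rule swap_cont[OF hc U0])
    have c2: "continuous_on (?U \<times> cbox (\<chi> i. - k) (\<chi> i. k)) (\<lambda>p. htf i j (snd p) (fst p))" for i j
      by (rule swap_cont[OF htc U0])
    have c3: "continuous_on (?U \<times> cbox (\<chi> i. - k) (\<chi> i. k)) (\<lambda>p. Ef (snd p))"
      by (rule continuous_on_compose2[OF Ec]) (auto intro!: continuous_intros)
    show "continuous_on (?U \<times> cbox (\<chi> i. - k) (\<chi> i. k))
       (\<lambda>(s, x). Ef x * (\<Sum>i\<in>UNIV. \<Sum>j\<in>UNIV. 2 * (h x s $ i $ j * htf i j x s)))"
      unfolding split_beta by (intro continuous_intros c1 c2 c3)
  qed (use t in auto)
  then have "((\<lambda>s. integral (bx k) (\<lambda>x. Ef x * (\<Sum>i\<in>UNIV. \<Sum>j\<in>UNIV. (h x s $ i $ j)\<^sup>2))) has_field_derivative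
     integral (bx k) (\<lambda>x. Ef x * (\<Sum>i\<in>UNIV. \<Sum>j\<in>UNIV. 2 * (h x t $ i $ j * htf i j x t)))) (at t)"
    using at_within_open[of t ?U] t by simp
  then show ?thesis unfolding feq .
qed

theorem lemma5p7:
  fixes \<eta> :: "real^'n::finite \<Rightarrow> real" and c :: real
  assumes "cutoff c \<eta>"
  shows "\<exists>C3>0. \<forall>(\<epsilon>::real) (h :: real^'n \<Rightarrow> real \<Rightarrow> real^'n^'n).
     0 < \<epsilon> \<and> \<epsilon> < 1/2 \<and> C21 h \<and> symmetric_field h \<and> ricci_deturck h \<and>
     (\<exists>B<\<epsilon>. \<forall>x. \<forall>t\<ge>0. norm (h x t) \<le> B) \<longrightarrow>
     (\<forall>R>0. \<forall>t>0. \<exists>D.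
        ((\<lambda>s. integral UNIV (\<lambda>x. etaR \<eta> R x * (norm (h x s))\<^sup>2)) has_real_derivative D) (at t) \<and>
        D / 2 \<le> (- 1/2 + C3 * \<epsilon>) * integral UNIV (\<lambda>x. etaR \<eta> R x * grad_sq h t x)
               + C3 / R\<^sup>2 * integral (ball 0 (2*R) - ball 0 R) (\<lambda>x. (norm (h x t))\<^sup>2))"
proof -
  have cutI: "cut c \<eta>" by unfold_locales (rule assms)
  interpret cut c \<eta> by (rule cutI)
  obtain M where M0: "M \<ge> 0" and M: "\<And>a z. \<bar>pd a \<phi> z\<bar> \<le> M" using dphi_bound by blast
  define C3 where "C3 = 3 * real CARD('n) ^ 5 + 22 * real CARD('n) ^ 6
     + real CARD('n) * (2 * M\<^sup>2 + 2 * (real CARD('n))\<^sup>2 * M\<^sup>2) + 1"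
  have C3pos: "C3 > 0" unfolding C3_def by (simp add: add_nonneg_pos)
  show ?thesis
  proof (rule exI[of _ C3], intro conjI C3pos allI impI)
    fix \<epsilon> :: real and h :: "real^'n \<Rightarrow> real \<Rightarrow> real^'n^'n" and R t :: real
    assume hyp: "0 < \<epsilon> \<and> \<epsilon> < 1/2 \<and> C21 h \<and> symmetric_field h \<and> ricci_deturck h \<and>
     (\<exists>B<\<epsilon>. \<forall>x. \<forall>t\<ge>0. norm (h x t) \<le> B)"
      and R: "R > 0" and t: "t > 0"
    from hyp obtain B where Be: "B < \<epsilon>" and nb: "\<And>x s. s \<ge> 0 \<Longrightarrow> norm (h x s) \<le> B" by blast
    have e2: "\<epsilon> < 1/2" and C21h: "C21 h" and RD: "ricci_deturck h" using hyp by auto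
    note C = C21h[unfolded C21_def, rule_format]
    have hc: "\<And>i j. continuous_on (UNIV \<times> {0..}) (\<lambda>(x,t). h x t $ i $ j)" using C by blast
    have "\<forall>i j. \<exists>ht. continuous_on (UNIV \<times> {0..}) (\<lambda>(x,t). ht x t) \<and>
        (\<forall>x. \<forall>t\<ge>0. ((\<lambda>s. h x s $ i $ j) has_real_derivative ht x t) (at t within {0..}))"
      using C by blast
    then obtain htf where htc: "\<And>i j. continuous_on (UNIV \<times> {0..}) (\<lambda>(x,t). htf i j x t)"
      and htd: "\<And>i j x s. s \<ge> 0 \<Longrightarrow> ((\<lambda>s. h x s $ i $ j) has_real_derivative htf i j x s) (at s within {0..})"
      by metis
    let ?H = "\<lambda>y. h y t"
    have Dh_eq: "Dh ?H a i j = (\<lambda>y. pd a (\<lambda>z. h z t $ i $ j) y)" for a i j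
      by (rule ext) (simp add: Dh_def)
    have slI: "slice ?H B"
    proof
      show "norm (h y t) \<le> B" for y using nb t by simp
      show "B \<le> 1/2" using Be e2 by simp
      fix a b i j
      show "ld a (\<lambda>y. h y t $ i $ j) (Dh ?H a i j)"
        unfolding Dh_eq using C t by (intro has_pd_ld) auto
      show "ld b (Dh ?H a i j) (pd b (Dh ?H a i j))"
        unfolding Dh_eq using C t by (intro has_pd_ld) auto
      show "continuous_on UNIV (\<lambda>y. h y t $ i $ j)"
        by (rule slice_cont[OF hc]) (use t in simp)
      show "continuous_on UNIV (Dh ?H a i j)"
        unfolding Dh_eq by (rule slice_cont) (use C t in auto)
      show "continuous_on UNIV (pd b (Dh ?H a i j))"
        unfolding Dh_eq by (rule slice_cont[where f="\<lambda>x t. pd b (\<lambda>y. pd a (\<lambda>z. h z t $ i $ j) y) x"]) (use C t in auto)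
    qed
    interpret en c \<eta> ?H B R M \<epsilon>
      by (intro en.intro cutI slI en_axioms.intro) (use R M M0 Be in auto)
    have CcC3: "Cc = C3" unfolding Cc_def cI_def C3_def ..
    let ?K = "bx (2*R+1) :: (real^'n) set"
    define D where "D = integral ?K (\<lambda>x. E R x * (\<Sum>i\<in>UNIV. \<Sum>j\<in>UNIV. 2 * (h x t $ i $ j * htf i j x t)))"
    have der: "((\<lambda>s. integral UNIV (\<lambda>x. E R x * (norm (h x s))\<^sup>2)) has_real_derivative D) (at t)"
      unfolding D_def
    proof (rule time_deriv[OF E_cont _ hc htc htd t])
      fix x :: "real^'n" assume "x \<notin> ?K"
      then show "E R x = 0" using out_bx E_zero[OF R] by blast
    qed auto
    have ht_eq: "htf i j x t = lap ?H i j x + Q0 ?H i j x + divQ1 ?H i j x" for i j x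
    proof -
      have "at t within {0..} = at t" using t by (intro at_within_interior) auto
      then have "((\<lambda>s. h x s $ i $ j) has_real_derivative htf i j x t) (at t)"
        using htd[where s=t and i=i and j=j and x=x] t by simp
      then have "deriv (\<lambda>s. h x s $ i $ j) t = htf i j x t" by (rule DERIV_imp_deriv)
      moreover have "deriv (\<lambda>s. h x s $ i $ j) t - lap ?H i j x = Q0 ?H i j x + divQ1 ?H i j x"
        using RD t unfolding ricci_deturck_def by blast
      ultimately show ?thesis by linarith
    qed
    have "D = integral ?K (\<lambda>x. 2 * (E R x * (\<Sum>i\<in>UNIV. \<Sum>j\<in>UNIV. ?H x $ i $ j * (lap ?H i j x + Q0 ?H i j x + divQ1 ?H i j x))))"
      unfolding D_def ht_eq by (simp add: sum_distrib_left mult_ac)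
    also have "\<dots> = 2 * integral ?K (\<lambda>x. E R x * (\<Sum>i\<in>UNIV. \<Sum>j\<in>UNIV. ?H x $ i $ j * (lap ?H i j x + Q0 ?H i j x + divQ1 ?H i j x)))"
      by (rule integral_mult_right)
    finally have "D / 2 = integral ?K (\<lambda>x. E R x * (\<Sum>i\<in>UNIV. \<Sum>j\<in>UNIV. ?H x $ i $ j * (lap ?H i j x + Q0 ?H i j x + divQ1 ?H i j x)))"
      by simp
    also have "\<dots> \<le> (- 1/2 + Cc * \<epsilon>) * integral UNIV (\<lambda>y. E R y * gsq ?H y)
     + Cc / R\<^sup>2 * integral (ball 0 (2*R) - ball 0 R) (\<lambda>y. (norm (?H y))\<^sup>2)"
      by (rule slice_main)
    finally have ineq: "D / 2 \<le> (- 1/2 + C3 * \<epsilon>) * integral UNIV (\<lambda>x. etaR \<eta> R x * grad_sq h t x)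
               + C3 / R\<^sup>2 * integral (ball 0 (2*R) - ball 0 R) (\<lambda>x. (norm (h x t))\<^sup>2)"
      unfolding CcC3 E_def gsq_def grad_sq_def .
    show "\<exists>D. ((\<lambda>s. integral UNIV (\<lambda>x. etaR \<eta> R x * (norm (h x s))\<^sup>2)) has_real_derivative D) (at t) \<and>
        D / 2 \<le> (- 1/2 + C3 * \<epsilon>) * integral UNIV (\<lambda>x. etaR \<eta> R x * grad_sq h t x)
               + C3 / R\<^sup>2 * integral (ball 0 (2*R) - ball 0 R) (\<lambda>x. (norm (h x t))\<^sup>2)"
      using der ineq unfolding E_def by blast
  qed
qed

end
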